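(* Let $L_{+-}$ be an oriented link diagram containing two crossings between two distinct components, the first positive and the second negative. For $\varepsilon,\delta\in\{+,-,0\}$ let $L_{\varepsilon\delta}$ denote the link obtained by making the first crossing of type $\varepsilon$ and the second of type $\delta$ (where $+$, $-$ mean positive/negative crossing and $0$ means the orientation-preserving smoothing). Then $$(t^2+t)\,[\Phi(L_{+-};t)-\Phi(L_{-+};t)]=(t-1)\,[\Phi(L_{0-};t)-\Phi(L_{-0};t)],$$ and for every integer $i\ge1$ $$\phi_i(L_{+-})-\phi_i(L_{-+})=-[\phi_i(L_{0-})-\phi_i(L_{-0})]-\tfrac32[\phi_{i-1}(L_{+-})-\phi_{i-1}(L_{-+})]-\tfrac12[\phi_{i-2}(L_{+-})-\phi_{i-2}(L_{-+})].$$
   Context: Let $\#L$ denote the number of components. $V(L;t)$ is the Jones polynomial normalized by $V(O;t)=1$ for the unknot, $V(\emptyset;t)=(t^{1/2}+t^{-1/2})^{-1}$, and $tV(L_+;t)-t^{-1}V(L_-;t)=(t^{1/2}-t^{-1/2})V(L_0;t)$; $X(L;t)=V(L;t)/(t^{1/2}+t^{-1/2})^{\#L-1}$; $\Phi(L;t)=\sum_{L'\subset L}(-1)^{\#L-\#L'}X(L';t)$ over all sublinks including $\emptyset$ and $L$, with $\Phi(\emptyset;t)=0$; $\Phi_i(L)=\frac{d^i}{dt^i}\Phi(L;t)|_{t=1}$; $\phi_j(L)=\frac{(-2)^{\#L}}{(\#L+j)!}\Phi_{\#L+j}(L)$ for all integers $j\ge-\#L$. Note $\#L_{+-}=\#L_{-+}=\#L_{0-}+1=\#L_{-0}+1\ge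 2$. *)

theory Defs
  imports "HOL-Analysis.Analysis"
begin

text \<open>Combinatorial oriented link diagrams (generalised PD codes).  A site is a 4-tuple (p,q,r,s)
  of arc labels listed counterclockwise around the site (viewed from above), where
  p and s are the incoming ends and q and r the outgoing ends; the two strands
  through the site are p to r and s to q.  The type of a site is Pos (positive
  crossing: the strand p to r passes under), Neg (negative crossing: the strand
  p to r passes over), or Zero (the oriented smoothing: p is joined to q, s to r).
  Arc labels occurring in no site are crossingless circles.\<close>

datatype ctype = Pos | Neg | Zero

type_synonym site = "nat \<times> nat \<times> nat \<times> nat"
type_synonym diagram = "nat set \<times> (site \<times> ctype) list"

definition arcs :: "diagram \<Rightarrow> nat set" where
  "arcs D = fst D"

definition sites :: "diagram \<Rightarrow> (site \<times> ctype) list" where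
  "sites D = snd D"

definition site_lab :: "site \<Rightarrow> nat \<Rightarrow> nat" where
  "site_lab x i = (case x of (p, q, r, s) \<Rightarrow>
     if i = 0 then p else if i = 1 then q else if i = 2 then r else s)"

definition in_ends :: "diagram \<Rightarrow> nat list" where
  "in_ends D = concat (map (\<lambda>(x, c). [site_lab x 0, site_lab x 3]) (sites D))"

definition out_ends :: "diagram \<Rightarrow> nat list" where
  "out_ends D = concat (map (\<lambda>(x, c). [site_lab x 1, site_lab x 2]) (sites D))"

text \<open>Every arc has exactly one tail (outgoing end) and one head (incoming end),
  or is a crossingless circle.\<close>
definition wf_diagram :: "diagram \<Rightarrow> bool" where
  "wf_diagram D \<longleftrightarrow> finite (arcs D) \<and> set (in_ends D) \<subseteq> arcs D \<and>
     (\<forall>a. count_list (in_ends D) a = count_list (out_ends D) a) \<and>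
     (\<forall>a. count_list (in_ends D) a \<le> 1)"

definition equiv_cl :: "('a \<times> 'a) set \<Rightarrow> ('a \<times> 'a) set" where
  "equiv_cl R = (R \<union> R\<inverse>)\<^sup>*"

subsection \<open>Planarity (classical, not virtual, diagrams)\<close>

definition darts :: "diagram \<Rightarrow> (nat \<times> nat) set" where
  "darts D = {(k, i). k < length (sites D) \<and> i < 4}"

definition dart_lab :: "diagram \<Rightarrow> nat \<times> nat \<Rightarrow> nat" where
  "dart_lab D d = site_lab (fst (sites D ! fst d)) (snd d)"

text \<open>Face tracing for the rotation system: follow the arc to its other end, then
  turn to the next end counterclockwise.\<close>
definition face_rel :: "diagram \<Rightarrow> ((nat \<times> nat) \<times> (nat \<times> nat)) set" where
  "face_rel D = {(d, (fst e, (snd e + 1) mod 4)) | d e.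
      d \<in> darts D \<and> e \<in> darts D \<and> d \<noteq> e \<and> dart_lab D d = dart_lab D e}"

definition num_faces :: "diagram \<Rightarrow> nat" where
  "num_faces D = card (darts D // equiv_cl (face_rel D))"

definition site_adj :: "diagram \<Rightarrow> (nat \<times> nat) set" where
  "site_adj D = {(k, l). k < length (sites D) \<and> l < length (sites D) \<and>
      (\<exists>i j. i < 4 \<and> j < 4 \<and> site_lab (fst (sites D ! k)) i = site_lab (fst (sites D ! l)) j)}"

definition num_site_comps :: "diagram \<Rightarrow> nat" where
  "num_site_comps D = card ({..<length (sites D)} // equiv_cl (site_adj D))"

text \<open>Euler's formula V - E + F = 2 per connected component (E = 2V): the
  projection is a disjoint union of spherical (= planar) 4-valent graphs.\<close>
definition planar_diagram :: "diagram \<Rightarrow> bool" where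
  "planar_diagram D \<longleftrightarrow> num_faces D = length (sites D) + 2 * num_site_comps D"

definition link_diagram :: "diagram \<Rightarrow> bool" where
  "link_diagram D \<longleftrightarrow> wf_diagram D \<and> planar_diagram D \<and>
     (\<forall>k < length (sites D). snd (sites D ! k) \<noteq> Zero)"

definition site_strands :: "site \<Rightarrow> ctype \<Rightarrow> (nat \<times> nat) set" where
  "site_strands x c = (if c = Zero
      then {(site_lab x 0, site_lab x 1), (site_lab x 3, site_lab x 2)}
      else {(site_lab x 0, site_lab x 2), (site_lab x 3, site_lab x 1)})"

definition strand_rel :: "diagram \<Rightarrow> (nat \<times> nat) set" where
  "strand_rel D = (\<Union>(x, c) \<in> set (sites D). site_strands x c)"

definition comps :: "diagram \<Rightarrow> nat set set" where
  "comps D = arcs D // equiv_cl (strand_rel D)"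

definition ncomp :: "diagram \<Rightarrow> nat" where
  "ncomp D = card (comps D)"

definition set_type :: "diagram \<Rightarrow> nat \<Rightarrow> ctype \<Rightarrow> diagram" where
  "set_type D k c = (arcs D, (sites D)[k := (fst (sites D ! k), c)])"

definition crossing_between :: "diagram \<Rightarrow> nat \<Rightarrow> nat set \<Rightarrow> nat set \<Rightarrow> bool" where
  "crossing_between D k K1 K2 \<longleftrightarrow>
     (let x = fst (sites D ! k) in
       (site_lab x 0 \<in> K1 \<and> site_lab x 3 \<in> K2) \<or> (site_lab x 0 \<in> K2 \<and> site_lab x 3 \<in> K1))"

subsection \<open>Kauffman bracket of the sublink consisting of the arcs in K\<close>

definition full_sites :: "diagram \<Rightarrow> nat set \<Rightarrow> nat set" where
  "full_sites D K = {k. k < length (sites D) \<and> snd (sites D ! k) \<noteq> Zero \<and>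
      site_lab (fst (sites D ! k)) 0 \<in> K \<and> site_lab (fst (sites D ! k)) 3 \<in> K}"

text \<open>Arc joinings at a site for the sublink K in a Kauffman state; a is True for
  the A-smoothing.  For a positive crossing the A-smoothing is the oriented one.
  Strands not in K are deleted (the other strand then simply passes through).\<close>
definition site_edges :: "nat set \<Rightarrow> bool \<Rightarrow> site \<Rightarrow> ctype \<Rightarrow> (nat \<times> nat) set" where
  "site_edges K a x c = (let p = site_lab x 0; q = site_lab x 1; r = site_lab x 2; s = site_lab x 3 in
     if c = Zero then {(p, q), (s, r)} \<inter> (K \<times> K)
     else if p \<in> K \<and> s \<in> K then
       (if a = (c = Pos) then {(p, q), (r, s)} else {(p, s), (q, r)})
     else if p \<in> K then {(p, r)}
     else if s \<in> K then {(s, q)}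
     else {})"

definition state_loops :: "diagram \<Rightarrow> nat set \<Rightarrow> nat set \<Rightarrow> nat" where
  "state_loops D K T = card (K // equiv_cl
     (\<Union>k \<in> {..<length (sites D)}. site_edges K (k \<in> T) (fst (sites D ! k)) (snd (sites D ! k))))"

definition bracket :: "diagram \<Rightarrow> nat set \<Rightarrow> real \<Rightarrow> real" where
  "bracket D K A = (\<Sum>T \<in> Pow (full_sites D K).
      A powi (int (card T) - int (card (full_sites D K - T))) *
      (- A\<^sup>2 - A powi (-2)) powi (int (state_loops D K T) - 1))"

definition writhe :: "diagram \<Rightarrow> nat set \<Rightarrow> int" where
  "writhe D K = (\<Sum>k \<in> full_sites D K. if snd (sites D ! k) = Pos then 1 else -1)"

text \<open>Jones polynomial of the sublink K (with m components), in the normalisation of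
  the paper: V(O) = 1, V(empty) = 1/(t^(1/2)+t^(-1/2)),
  t V(L+) - t^(-1) V(L-) = (t^(1/2) - t^(-1/2)) V(L0).  (This equals
  (-1)^(m-1) times the usual Jones polynomial evaluated at 1/t.)\<close>
definition jonesV :: "diagram \<Rightarrow> nat set \<Rightarrow> nat \<Rightarrow> real \<Rightarrow> real" where
  "jonesV D K m t = (let A = t powr (1/4); w = writhe D K in
     (-1) ^ (m + 1) * ((-1) powi w * A powi (-3 * w)) * bracket D K A)"

definition Xinv :: "diagram \<Rightarrow> nat set set \<Rightarrow> real \<Rightarrow> real" where
  "Xinv D C t = jonesV D (\<Union>C) (card C) t /
       (t powr (1/2) + t powr (-1/2)) powi (int (card C) - 1)"

definition Phi :: "diagram \<Rightarrow> real \<Rightarrow> real" where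
  "Phi D t = (if ncomp D = 0 then 0 else
      (\<Sum>C \<in> Pow (comps D). (-1) ^ (ncomp D - card C) * Xinv D C t))"

definition Phi_d :: "diagram \<Rightarrow> nat \<Rightarrow> real" where
  "Phi_d D i = (deriv ^^ i) (Phi D) 1"

definition phi :: "diagram \<Rightarrow> int \<Rightarrow> real" where
  "phi D j = (-2) ^ ncomp D / fact (nat (int (ncomp D) + j)) * Phi_d D (nat (int (ncomp D) + j))"

end

theory Submission
  imports Defs
begin

fun Dn :: "nat \<Rightarrow> (real \<Rightarrow> real) \<Rightarrow> bool" where
  "Dn 0 h = (\<forall>x>0. h field_differentiable at x)"
| "Dn (Suc n) h = ((\<forall>x>0. h field_differentiable at x) \<and> Dn n (deriv h))"

definition smooth :: "(real \<Rightarrow> real) \<Rightarrow> bool" where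
  "smooth h = (\<forall>n. Dn n h)"

lemma ev_pos: "(x::real) > 0 \<Longrightarrow> (\<forall>y>0. h y = k y) \<Longrightarrow> eventually (\<lambda>y. h y = k y) (nhds x)"
proof -
  assume "x > 0" "\<forall>y>0. h y = k y"
  moreover have "eventually (\<lambda>y. y \<in> {0<..}) (nhds x)"
    using \<open>x > 0\<close> by (intro eventually_nhds_in_open) auto
  ultimately show ?thesis by (auto elim: eventually_mono)
qed

lemma fd_cong: "(\<forall>y>0. h y = k y) \<Longrightarrow> (x::real) > 0 \<Longrightarrow> h field_differentiable at x \<Longrightarrow> k field_differentiable at x"
  unfolding field_differentiable_def
  using DERIV_cong_ev[OF refl ev_pos refl] by blast

lemma deriv_cong_pos: "(\<forall>y>0. h y = k y) \<Longrightarrow> (x::real) > 0 \<Longrightarrow> deriv h x = deriv k x"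
  by (rule deriv_cong_ev[OF ev_pos]) auto

lemma Dn_cong: "(\<forall>y>0. h y = k y) \<Longrightarrow> Dn n h \<Longrightarrow> Dn n k"
proof (induction n arbitrary: h k)
  case 0 then show ?case using fd_cong by auto
next
  case (Suc n)
  have "\<forall>y>0. deriv h y = deriv k y" using Suc.prems(1) deriv_cong_pos by blast
  with Suc show ?case using fd_cong by auto
qed

lemma Dn_mono: "Dn (Suc n) h \<Longrightarrow> Dn n h"
  by (induction n arbitrary: h) auto


lemma Dn_const: "Dn n (\<lambda>x. c)"
  by (induction n arbitrary: c) auto

lemma Dn_add: "Dn n f \<Longrightarrow> Dn n g \<Longrightarrow> Dn n (\<lambda>x. f x + g x)"
proof (induction n arbitrary: f g)
  case 0 then show ?case by (auto intro: field_differentiable_add)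
next
  case (Suc n)
  have "Dn n (\<lambda>x. deriv f x + deriv g x)" using Suc by auto
  moreover have "\<forall>y>0. deriv f y + deriv g y = deriv (\<lambda>x. f x + g x) y" using Suc.prems by simp
  ultimately show ?case using Suc.prems by (auto intro: field_differentiable_add Dn_cong)
qed

lemma Dn_mult: "Dn n f \<Longrightarrow> Dn n g \<Longrightarrow> Dn n (\<lambda>x. f x * g x)"
proof (induction n arbitrary: f g)
  case 0 then show ?case by (auto intro: field_differentiable_mult)
next
  case (Suc n)
  have "Dn n (\<lambda>x. f x * deriv g x)" "Dn n (\<lambda>x. deriv f x * g x)"
    using Suc Dn_mono by auto
  then have "Dn n (\<lambda>x. f x * deriv g x + deriv f x * g x)" by (rule Dn_add)
  moreover have "\<forall>y>0. f y * deriv g y + deriv f y * g y = deriv (\<lambda>x. f x * g x) y" using Suc.prems by simp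
  ultimately show ?case using Suc.prems by (auto intro: field_differentiable_mult Dn_cong)
qed

lemma smooth_const: "smooth (\<lambda>x. c)" by (simp add: smooth_def Dn_const)
lemma smooth_add: "smooth f \<Longrightarrow> smooth g \<Longrightarrow> smooth (\<lambda>x. f x + g x)" by (simp add: smooth_def Dn_add)
lemma smooth_mult: "smooth f \<Longrightarrow> smooth g \<Longrightarrow> smooth (\<lambda>x. f x * g x)" by (simp add: smooth_def Dn_mult)
lemma smooth_uminus: "smooth f \<Longrightarrow> smooth (\<lambda>x. - f x)"
  using smooth_mult[OF smooth_const[of "-1"]] by simp
lemma smooth_diff: "smooth f \<Longrightarrow> smooth g \<Longrightarrow> smooth (\<lambda>x. f x - g x)"
  using smooth_add[OF _ smooth_uminus] by simp
lemma smooth_sum: "finite A \<Longrightarrow> (\<And>a. a \<in> A \<Longrightarrow> smooth (f a)) \<Longrightarrow> smooth (\<lambda>x. \<Sum>a\<in>A. f a x)"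
  by (induction A rule: finite_induct) (auto intro: smooth_const smooth_add)
lemma smooth_power: "smooth f \<Longrightarrow> smooth (\<lambda>x. f x ^ n)"
  by (induction n) (auto intro: smooth_const smooth_mult)

lemma smooth_deriv: "smooth f \<Longrightarrow> smooth (deriv f)"
  by (auto simp: smooth_def) (metis Dn.simps(2))

lemma smooth_fd: "smooth f \<Longrightarrow> x > 0 \<Longrightarrow> f field_differentiable at x"
  by (auto simp: smooth_def) (metis Dn.simps(1))

lemma Dn_inverse: "smooth f \<Longrightarrow> \<forall>x>0. f x \<noteq> 0 \<Longrightarrow> Dn n (\<lambda>x. inverse (f x))"
proof (induction n)
  case 0 then show ?case using smooth_fd by (auto intro: field_differentiable_inverse)
next
  case (Suc n)
  have d: "Dn n (deriv f)" using Suc.prems smooth_deriv smooth_def by blast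
  have "Dn n (\<lambda>x. inverse (f x) * inverse (f x))" by (rule Dn_mult[OF Suc.IH[OF Suc.prems] Suc.IH[OF Suc.prems]])
  then have "Dn n (\<lambda>x. (-1 * deriv f x) * (inverse (f x) * inverse (f x)))"
    by (rule Dn_mult[OF Dn_mult[OF Dn_const d]])
  moreover have "\<forall>y>0. (-1 * deriv f y) * (inverse (f y) * inverse (f y)) = deriv (\<lambda>x. inverse (f x)) y"
  proof (intro allI impI)
    fix y :: real assume "y > 0"
    then have "f field_differentiable at y" "f y \<noteq> 0" using Suc.prems smooth_fd by auto
    then show "(-1 * deriv f y) * (inverse (f y) * inverse (f y)) = deriv (\<lambda>x. inverse (f x)) y"
      by (simp add: field_simps power2_eq_square)
  qed
  ultimately have "Dn n (deriv (\<lambda>x. inverse (f x)))" by (rule Dn_cong[rotated])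
  moreover have "\<forall>x>0. (\<lambda>x. inverse (f x)) field_differentiable at x"
    using Suc.prems smooth_fd by (auto intro: field_differentiable_inverse)
  ultimately show ?case by simp
qed

lemma smooth_inverse: "smooth f \<Longrightarrow> \<forall>x>0. f x \<noteq> 0 \<Longrightarrow> smooth (\<lambda>x. inverse (f x))"
  by (simp add: smooth_def Dn_inverse)

lemma smooth_powi: "smooth f \<Longrightarrow> \<forall>x>0. f x \<noteq> 0 \<Longrightarrow> smooth (\<lambda>x. f x powi k)"
  unfolding power_int_def
  by (cases "k \<ge> 0") (auto intro: smooth_power smooth_inverse simp: power_inverse[symmetric])

lemma smooth_divide: "smooth f \<Longrightarrow> smooth g \<Longrightarrow> \<forall>x>0. g x \<noteq> 0 \<Longrightarrow> smooth (\<lambda>x. f x / g x)"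
  by (simp add: divide_inverse smooth_mult smooth_inverse)

lemma Dn_powr: "Dn n (\<lambda>x. x powr a)"
proof (induction n arbitrary: a)
  case 0 then show ?case
    by (auto intro!: derivative_eq_intros simp: field_differentiable_def)
next
  case (Suc n)
  have "Dn n (\<lambda>x. a * x powr (a - 1))" using Dn_mult[OF Dn_const Suc.IH] .
  moreover have "\<forall>y>0. a * y powr (a - 1) = deriv (\<lambda>x. x powr a) y"
    by (auto intro!: DERIV_imp_deriv[symmetric] derivative_eq_intros)
  ultimately show ?case
    by (auto intro!: derivative_eq_intros simp: field_differentiable_def intro: Dn_cong)
qed

lemma smooth_powr: "smooth (\<lambda>x. x powr a)" by (simp add: smooth_def Dn_powr)

lemma smooth_cong: "smooth f \<Longrightarrow> \<forall>x>0. f x = g x \<Longrightarrow> smooth g"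
  by (auto simp: smooth_def intro: Dn_cong)

lemma hd_fd: "smooth f \<Longrightarrow> x > 0 \<Longrightarrow> (deriv ^^ n) f field_differentiable at x"
proof (induction n arbitrary: f)
  case 0 then show ?case using smooth_fd by simp
next
  case (Suc n)
  have "(deriv ^^ Suc n) f = (deriv ^^ n) (deriv f)" by (simp add: funpow_Suc_right del: funpow.simps)
  then show ?case using Suc smooth_deriv by simp
qed

lemma hd_Suc: "(deriv ^^ Suc n) h x = deriv ((deriv ^^ n) h) x"
  by simp

lemma hd_diff: "smooth f \<Longrightarrow> smooth g \<Longrightarrow>
   \<forall>x>0. (deriv ^^ n) (\<lambda>t. f t - g t) x = (deriv ^^ n) f x - (deriv ^^ n) g x"
proof (induction n)
  case 0 then show ?case by simp
next
  case (Suc n)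
  show ?case
  proof (intro allI impI)
    fix x :: real assume x: "x > 0"
    have "(deriv ^^ Suc n) (\<lambda>t. f t - g t) x = deriv (\<lambda>y. (deriv ^^ n) f y - (deriv ^^ n) g y) x"
      unfolding hd_Suc using Suc x by (intro deriv_cong_pos) auto
    also have "\<dots> = (deriv ^^ Suc n) f x - (deriv ^^ Suc n) g x"
      unfolding hd_Suc using Suc.prems hd_fd x by (intro deriv_diff) auto
    finally show "(deriv ^^ Suc n) (\<lambda>t. f t - g t) x = (deriv ^^ Suc n) f x - (deriv ^^ Suc n) g x" .
  qed
qed


lemma hd_DERIV: "smooth F \<Longrightarrow> x > 0 \<Longrightarrow> ((deriv ^^ k) F has_field_derivative (deriv ^^ Suc k) F x) (at x)"
  using hd_fd[of F x k] by (simp add: DERIV_deriv_iff_field_differentiable)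

lemma hd_poly2: "smooth F \<Longrightarrow> \<forall>x>0. (deriv ^^ n) (\<lambda>t. (t\<^sup>2 + t) * F t) x =
   (x\<^sup>2 + x) * (deriv ^^ n) F x + real n * (2*x+1) * (deriv ^^ (n-1)) F x
   + real n * (real n - 1) * (deriv ^^ (n-2)) F x"
proof (induction n)
  case 0 then show ?case by simp
next
  case (Suc n)
  show ?case
  proof (intro allI impI)
    fix x :: real assume x: "x > 0"
    let ?d = "\<lambda>k. (deriv ^^ k) F"
    have "(deriv ^^ Suc n) (\<lambda>t. (t\<^sup>2 + t) * F t) x = deriv (\<lambda>y. (y\<^sup>2 + y) * ?d n y + real n * (2*y+1) * ?d (n-1) y
   + real n * (real n - 1) * ?d (n-2) y) x"
      unfolding hd_Suc using Suc x by (intro deriv_cong_pos) auto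
    also have "\<dots> = (2*x+1) * ?d n x + (x\<^sup>2 + x) * ?d (Suc n) x + real n * 2 * ?d (n-1) x
       + real n * (2*x+1) * ?d (Suc (n-1)) x + real n * (real n - 1) * ?d (Suc (n-2)) x"
      by (rule DERIV_imp_deriv) (auto intro!: derivative_eq_intros hd_DERIV[OF Suc.prems x] simp: algebra_simps)
    also have "\<dots> = (x\<^sup>2 + x) * ?d (Suc n) x + real (Suc n) * (2*x+1) * ?d (Suc n - 1) x
   + real (Suc n) * (real (Suc n) - 1) * ?d (Suc n - 2) x"
    proof (cases n)
      case 0 then show ?thesis by (simp add: algebra_simps)
    next
      case (Suc m) note m = this
      show ?thesis
      proof (cases m)
        case 0 then show ?thesis using m by (simp add: algebra_simps)
      next
        case (Suc k) then show ?thesis using m by (simp add: algebra_simps)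
      qed
    qed
    finally show "(deriv ^^ Suc n) (\<lambda>t. (t\<^sup>2 + t) * F t) x = (x\<^sup>2 + x) * ?d (Suc n) x + real (Suc n) * (2*x+1) * ?d (Suc n - 1) x
   + real (Suc n) * (real (Suc n) - 1) * ?d (Suc n - 2) x" .
  qed
qed

lemma hd_poly1: "smooth G \<Longrightarrow> \<forall>x>0. (deriv ^^ n) (\<lambda>t. (t - 1) * G t) x =
   (x - 1) * (deriv ^^ n) G x + real n * (deriv ^^ (n-1)) G x"
proof (induction n)
  case 0 then show ?case by simp
next
  case (Suc n)
  show ?case
  proof (intro allI impI)
    fix x :: real assume x: "x > 0"
    let ?d = "\<lambda>k. (deriv ^^ k) G"
    have "(deriv ^^ Suc n) (\<lambda>t. (t - 1) * G t) x = deriv (\<lambda>y. (y - 1) * ?d n y + real n * ?d (n-1) y) x"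
      unfolding hd_Suc using Suc x by (intro deriv_cong_pos) auto
    also have "\<dots> = ?d n x + (x - 1) * ?d (Suc n) x + real n * ?d (Suc (n-1)) x"
      by (rule DERIV_imp_deriv) (auto intro!: derivative_eq_intros hd_DERIV[OF Suc.prems x] simp: algebra_simps)
    also have "\<dots> = (x - 1) * ?d (Suc n) x + real (Suc n) * ?d (Suc n - 1) x"
      by (cases n) (simp_all add: algebra_simps)
    finally show "(deriv ^^ Suc n) (\<lambda>t. (t - 1) * G t) x = (x - 1) * ?d (Suc n) x + real (Suc n) * ?d (Suc n - 1) x" .
  qed
qed


lemma deriv_rel:
  assumes F: "smooth F" and G: "smooth G" and rel: "\<forall>t>0. (t\<^sup>2 + t) * F t = (t - 1) * G t"
    and N: "N \<ge> 2"
  shows "2 * (deriv ^^ N) F 1 + 3 * real N * (deriv ^^ (N-1)) F 1 + real N * (real N - 1) * (deriv ^^ (N-2)) F 1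
     = real N * (deriv ^^ (N-1)) G 1"
proof -
  have "(deriv ^^ N) (\<lambda>t. (t\<^sup>2 + t) * F t) 1 = (deriv ^^ N) (\<lambda>t. (t - 1) * G t) 1"
    by (rule higher_deriv_cong_ev[OF ev_pos]) (use rel in auto)
  then show ?thesis using hd_poly2[OF F, rule_format, of 1 N] hd_poly1[OF G, rule_format, of 1 N]
    by (simp add: algebra_simps)
qed

lemma set_type_arcs[simp]: "arcs (set_type D k c) = arcs D"
  by (simp add: set_type_def arcs_def)

lemma set_type_len[simp]: "length (sites (set_type D k c)) = length (sites D)"
  by (simp add: set_type_def sites_def)

lemma set_type_nth: "k < length (sites D) \<Longrightarrow>
  sites (set_type D k c) ! j = (if j = k then (fst (sites D ! k), c) else sites D ! j)"
  by (simp add: set_type_def sites_def arcs_def nth_list_update)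

lemma set_type_fst[simp]: "k < length (sites D) \<Longrightarrow> fst (sites (set_type D k c) ! j) = fst (sites D ! j)"
  by (simp add: set_type_nth)

lemma set_type_snd: "k < length (sites D) \<Longrightarrow> snd (sites (set_type D k c) ! j) = (if j = k then c else snd (sites D ! j))"
  by (simp add: set_type_nth)

lemma set_type_same: "k < length (sites D) \<Longrightarrow> snd (sites D ! k) = c \<Longrightarrow> set_type D k c = D"
  unfolding set_type_def sites_def arcs_def by (metis list_update_id prod.collapse)

lemma set_type_twice: "k < length (sites D) \<Longrightarrow> set_type (set_type D k c) k c' = set_type D k c'"
  by (simp add: set_type_def sites_def arcs_def)

lemma map_update_ign: "k < length xs \<Longrightarrow> (\<And>x c c'. g (x, c) = g (x, c')) \<Longrightarrow>
  map g (xs[k := (fst (xs ! k), c)]) = map g xs"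
  by (metis list_update_id map_update prod.collapse)

lemma in_ends_set_type[simp]: "k < length (sites D) \<Longrightarrow> in_ends (set_type D k c) = in_ends D"
  unfolding in_ends_def set_type_def sites_def snd_conv by (subst map_update_ign) auto

lemma out_ends_set_type[simp]: "k < length (sites D) \<Longrightarrow> out_ends (set_type D k c) = out_ends D"
  unfolding out_ends_def set_type_def sites_def snd_conv by (subst map_update_ign) auto

lemma wf_set_type: "k < length (sites D) \<Longrightarrow> wf_diagram (set_type D k c) = wf_diagram D"
  by (simp add: wf_diagram_def)

lemma equiv_cl_sym_eq: "R \<union> R\<inverse> = S \<union> S\<inverse> \<Longrightarrow> equiv_cl R = equiv_cl S"
  by (simp add: equiv_cl_def)

lemma jonesV_indep:
  assumes len: "length (sites D') = length (sites D)"
    and fst: "\<forall>j<length (sites D). fst (sites D' ! j) = fst (sites D ! j)"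
    and snd: "\<forall>j<length (sites D). snd (sites D' ! j) = snd (sites D ! j) \<or>
       (j \<notin> full_sites D K \<and> j \<notin> full_sites D' K \<and>
        (\<forall>a. site_edges K a (fst (sites D ! j)) (snd (sites D ! j)) = site_edges K a (fst (sites D ! j)) (snd (sites D' ! j))))"
  shows "jonesV D' K m t = jonesV D K m t"
proof -
  have F: "full_sites D' K = full_sites D K"
  proof -
    have "j \<in> full_sites D' K \<longleftrightarrow> j \<in> full_sites D K" for j
    proof (cases "j < length (sites D)")
      case True then show ?thesis using fst snd[rule_format, OF True] by (auto simp: full_sites_def len)
    next
      case False then show ?thesis by (auto simp: full_sites_def len)
    qed
    then show ?thesis by auto
  qed
  have W: "writhe D' K = writhe D K"
    unfolding writhe_def F
  proof (rule sum.cong[OF refl])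
    fix j assume "j \<in> full_sites D K"
    then have "snd (sites D' ! j) = snd (sites D ! j)" using snd F by (auto simp: full_sites_def)
    then show "(if snd (sites D' ! j) = Pos then 1 else - 1) = (if snd (sites D ! j) = Pos then 1 else (- 1::int))" by simp
  qed
  have S: "state_loops D' K T = state_loops D K T" for T
  proof -
    have "(\<Union>k \<in> {..<length (sites D')}. site_edges K (k \<in> T) (fst (sites D' ! k)) (snd (sites D' ! k)))
        = (\<Union>k \<in> {..<length (sites D)}. site_edges K (k \<in> T) (fst (sites D ! k)) (snd (sites D ! k)))"
      unfolding len
    proof (rule SUP_cong[OF refl])
      fix j assume "j \<in> {..<length (sites D)}"
      then show "site_edges K (j \<in> T) (fst (sites D' ! j)) (snd (sites D' ! j)) = site_edges K (j \<in> T) (fst (sites D ! j)) (snd (sites D ! j))"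
        using fst snd by auto
    qed
    then show ?thesis unfolding state_loops_def by simp
  qed
  have "bracket D' K A = bracket D K A" for A
    unfolding bracket_def F S ..
  then show ?thesis unfolding jonesV_def W Let_def by simp
qed


subsection \<open>Skein relation at a single site\<close>

lemma UN_split_k: "k < n \<Longrightarrow> (\<Union>j\<in>{..<n}. f j) = f k \<union> (\<Union>j\<in>{..<n} - {k}. f j)"
  by auto

lemma loops_eq:
  assumes k: "k < length (sites D)"
    and T: "\<forall>j<length (sites D). j \<noteq> k \<longrightarrow> (j \<in> T1 \<longleftrightarrow> j \<in> T2)"
    and e: "site_edges K (k \<in> T1) (fst (sites D ! k)) c1 \<union> (site_edges K (k \<in> T1) (fst (sites D ! k)) c1)\<inverse>
          = site_edges K (k \<in> T2) (fst (sites D ! k)) c2 \<union> (site_edges K (k \<in> T2) (fst (sites D ! k)) c2)\<inverse>"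
  shows "state_loops (set_type D k c1) K T1 = state_loops (set_type D k c2) K T2"
proof -
  let ?U = "\<lambda>c T. (\<Union>j \<in> {..<length (sites D)}. site_edges K (j \<in> T) (fst (sites (set_type D k c) ! j)) (snd (sites (set_type D k c) ! j)))"
  let ?E = "\<lambda>T. (\<Union>j \<in> {..<length (sites D)} - {k}. site_edges K (j \<in> T) (fst (sites D ! j)) (snd (sites D ! j)))"
  have U: "?U c T = site_edges K (k \<in> T) (fst (sites D ! k)) c \<union> ?E T" for c T
  proof -
    have "?U c T = site_edges K (k \<in> T) (fst (sites (set_type D k c) ! k)) (snd (sites (set_type D k c) ! k))
       \<union> (\<Union>j \<in> {..<length (sites D)} - {k}. site_edges K (j \<in> T) (fst (sites (set_type D k c) ! j)) (snd (sites (set_type D k c) ! j)))"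
      by (rule UN_split_k[OF k])
    also have "(\<Union>j \<in> {..<length (sites D)} - {k}. site_edges K (j \<in> T) (fst (sites (set_type D k c) ! j)) (snd (sites (set_type D k c) ! j)))
       = ?E T"
      by (rule SUP_cong[OF refl]) (simp add: set_type_nth[OF k])
    finally show ?thesis by (simp add: set_type_nth[OF k])
  qed
  have "?E T1 = ?E T2" using T by (intro SUP_cong) auto
  moreover have UU: "\<And>X Y :: (nat \<times> nat) set. (X \<union> Y) \<union> (X \<union> Y)\<inverse> = (X \<union> X\<inverse>) \<union> (Y \<union> Y\<inverse>)" by auto
  ultimately have "?U c1 T1 \<union> (?U c1 T1)\<inverse> = ?U c2 T2 \<union> (?U c2 T2)\<inverse>"
    unfolding U UU e by simp
  then have "equiv_cl (?U c1 T1) = equiv_cl (?U c2 T2)" by (rule equiv_cl_sym_eq)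
  then show ?thesis unfolding state_loops_def set_type_len by simp
qed

lemma powi_plus1: "(A::real) \<noteq> 0 \<Longrightarrow> A powi (e + 1) = A * A powi e"
  by (simp add: power_int_add)

lemma powi_minus1: "(A::real) \<noteq> 0 \<Longrightarrow> A powi (e - 1) = inverse A * A powi e"
  by (simp add: power_int_diff field_simps)

lemma bracket_split:
  fixes A :: real and g :: "nat set \<Rightarrow> real"
  assumes A: "A \<noteq> 0" and kF: "k \<notin> F" and fin: "finite F"
  shows "(\<Sum>T\<in>Pow (insert k F). A powi (int (card T) - int (card (insert k F - T))) * g T)
       = (\<Sum>T\<in>Pow F. A powi (int (card T) - int (card (F - T))) * (A * g (insert k T) + inverse A * g T))"
proof -
  have disj: "Pow F \<inter> insert k ` Pow F = {}" using kF by auto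
  have inj: "inj_on (insert k) (Pow F)" using kF by (auto simp: inj_on_def)
  have fins: "finite (Pow F)" "finite (insert k ` Pow F)" using fin by auto
  have "(\<Sum>T\<in>Pow (insert k F). A powi (int (card T) - int (card (insert k F - T))) * g T)
      = (\<Sum>T\<in>Pow F. A powi (int (card T) - int (card (insert k F - T))) * g T)
        + (\<Sum>T\<in>insert k ` Pow F. A powi (int (card T) - int (card (insert k F - T))) * g T)"
    unfolding Pow_insert by (rule sum.union_disjoint[OF fins disj])
  also have "(\<Sum>T\<in>insert k ` Pow F. A powi (int (card T) - int (card (insert k F - T))) * g T)
     = (\<Sum>T\<in>Pow F. A powi (int (card (insert k T)) - int (card (insert k F - insert k T))) * g (insert k T))"
    by (rule sum.reindex[OF inj, unfolded comp_def])
  also have "\<dots> = (\<Sum>T\<in>Pow F. A * (A powi (int (card T) - int (card (F - T))) * g (insert k T)))"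
  proof (rule sum.cong[OF refl])
    fix T assume "T \<in> Pow F"
    then have "T \<subseteq> F" "k \<notin> T" "finite T" using kF fin finite_subset by auto
    then have "int (card (insert k T)) - int (card (insert k F - insert k T)) = (int (card T) - int (card (F - T))) + 1"
      using kF by auto
    then show "A powi (int (card (insert k T)) - int (card (insert k F - insert k T))) * g (insert k T)
         = A * (A powi (int (card T) - int (card (F - T))) * g (insert k T))"
      by (simp only: powi_plus1[OF A] mult.assoc)
  qed
  also have "(\<Sum>T\<in>Pow F. A powi (int (card T) - int (card (insert k F - T))) * g T)
     = (\<Sum>T\<in>Pow F. inverse A * (A powi (int (card T) - int (card (F - T))) * g T))"
  proof (rule sum.cong[OF refl])
    fix T assume "T \<in> Pow F"
    then have "T \<subseteq> F" "k \<notin> T" "finite T" using kF fin finite_subset by auto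
    then have "insert k F - T = insert k (F - T)" "finite (F - T)" "k \<notin> F - T" using fin kF by auto
    then have "int (card T) - int (card (insert k F - T)) = (int (card T) - int (card (F - T))) - 1" by simp
    then show "A powi (int (card T) - int (card (insert k F - T))) * g T
         = inverse A * (A powi (int (card T) - int (card (F - T))) * g T)"
      by (simp only: powi_minus1[OF A] mult.assoc)
  qed
  finally show ?thesis unfolding distrib_left sum.distrib by (simp add: mult_ac add.commute)
qed


lemma skein_alg0:
  fixes A Z B s P :: real
  assumes a0: "A \<noteq> 0"
  shows "A^4 * ((-1)^(m+1) * (- s * (P * inverse (A^3))) * (A*Z + inverse A * B))
     - inverse (A^4) * ((-1)^(m+1) * (- s * (P * A^3)) * (inverse A * Z + A * B))
     = (A^2 - inverse (A^2)) * ((-1)^m * (s * P) * Z)"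
proof -
  have X: "A^4 * (- s * (P * inverse (A^3))) * (A*Z + inverse A * B) - inverse (A^4) * (- s * (P * A^3)) * (inverse A * Z + A * B)
     = - ((A^2 - inverse (A^2)) * (s * P) * Z)"
    using a0 by (simp add: field_simps) (simp add: algebra_simps power_numeral_reduce)
  have "A^4 * ((-1)^(m+1) * (- s * (P * inverse (A^3))) * (A*Z + inverse A * B))
     - inverse (A^4) * ((-1)^(m+1) * (- s * (P * A^3)) * (inverse A * Z + A * B))
     = (-1)^(m+1) * (A^4 * (- s * (P * inverse (A^3))) * (A*Z + inverse A * B) - inverse (A^4) * (- s * (P * A^3)) * (inverse A * Z + A * B))"
    by (simp only: right_diff_distrib mult.assoc mult.left_commute)
  also have "\<dots> = (A^2 - inverse (A^2)) * ((-1)^m * (s * P) * Z)"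
    unfolding X by simp
  finally show ?thesis .
qed

lemma skein_alg:
  fixes A Z B :: real and w :: int
  assumes A: "A > 0"
  shows "A^4 * ((-1)^(m+1) * ((-1) powi (w+1) * A powi (-3*(w+1))) * (A*Z + inverse A * B))
     - inverse (A^4) * ((-1)^(m+1) * ((-1) powi (w-1) * A powi (-3*(w-1))) * (inverse A * Z + A * B))
     = (A^2 - inverse (A^2)) * ((-1)^m * ((-1) powi w * A powi (-3*w)) * Z)"
proof -
  have a0: "A \<noteq> 0" using A by simp
  have e1: "(-1::real) powi (w+1) = - ((-1) powi w)" by (simp add: powi_plus1)
  have e2: "(-1::real) powi (w-1) = - ((-1) powi w)" by (simp add: powi_minus1)
  have "A powi (-3*w + (-3)) = A powi (-3*w) * A powi (-3)"
    using a0 by (intro power_int_add) simp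
  moreover have "A powi (-3) = inverse (A^3)" by (simp add: power_int_minus[of A 3, simplified])
  moreover have "-3*(w+1) = -3*w + (-3)" by simp
  ultimately have e3: "A powi (-3*(w+1)) = A powi (-3*w) * inverse (A^3)" by simp
  have "A powi (-3*w + 3) = A powi (-3*w) * A powi 3"
    using a0 by (intro power_int_add) simp
  moreover have "-3*(w-1) = -3*w + 3" by simp
  ultimately have e4: "A powi (-3*(w-1)) = A powi (-3*w) * A^3" by simp
  show ?thesis unfolding e1 e2 e3 e4 by (rule skein_alg0[OF a0])
qed

lemma full_sites_set_type:
  assumes k: "k < length (sites D)"
  shows "full_sites (set_type D k c) K = (if c \<noteq> Zero \<and> site_lab (fst (sites D ! k)) 0 \<in> K \<and> site_lab (fst (sites D ! k)) 3 \<in> K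
     then insert k (full_sites D K - {k}) else full_sites D K - {k})"
  using k by (auto simp: full_sites_def set_type_nth)

lemma writhe_set_type:
  assumes k: "k < length (sites D)"
  shows "writhe (set_type D k c) K = (if c \<noteq> Zero \<and> site_lab (fst (sites D ! k)) 0 \<in> K \<and> site_lab (fst (sites D ! k)) 3 \<in> K
     then (if c = Pos then 1 else -1) else 0) + (\<Sum>j\<in>full_sites D K - {k}. if snd (sites D ! j) = Pos then 1 else -1)"
proof -
  have fin: "finite (full_sites D K - {k})" by (rule finite_subset[of _ "{..<length (sites D)}"]) (auto simp: full_sites_def)
  have S: "(\<Sum>j\<in>full_sites D K - {k}. if snd (sites (set_type D k c) ! j) = Pos then 1 else -1)
      = (\<Sum>j\<in>full_sites D K - {k}. if snd (sites D ! j) = Pos then 1 else (-1::int))"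
    by (rule sum.cong[OF refl]) (simp add: set_type_nth[OF k])
  let ?S = "full_sites D K - {k}"
  show ?thesis
  proof (cases "c \<noteq> Zero \<and> site_lab (fst (sites D ! k)) 0 \<in> K \<and> site_lab (fst (sites D ! k)) 3 \<in> K")
    case True
    then have "writhe (set_type D k c) K = (\<Sum>j\<in>insert k ?S. if snd (sites (set_type D k c) ! j) = Pos then 1 else -1)"
      unfolding writhe_def full_sites_set_type[OF k] by simp
    also have "\<dots> = (if c = Pos then 1 else -1) + (\<Sum>j\<in>?S. if snd (sites (set_type D k c) ! j) = Pos then 1 else -1)"
      by (subst sum.insert[OF fin]) (simp_all add: set_type_nth[OF k])
    finally show ?thesis using True S by simp
  next
    case False
    then have "writhe (set_type D k c) K = (\<Sum>j\<in>?S. if snd (sites (set_type D k c) ! j) = Pos then 1 else -1)"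
      by (simp only: writhe_def full_sites_set_type[OF k] if_not_P[OF False] if_False)
    then show ?thesis unfolding if_not_P[OF False] using S by simp
  qed
qed

lemma jones_skein:
  assumes k: "k < length (sites D)"
    and K: "site_lab (fst (sites D ! k)) 0 \<in> K" "site_lab (fst (sites D ! k)) 1 \<in> K"
           "site_lab (fst (sites D ! k)) 2 \<in> K" "site_lab (fst (sites D ! k)) 3 \<in> K"
    and m: "m \<ge> 1" and t: "t > 0"
  shows "t * jonesV (set_type D k Pos) K m t - inverse t * jonesV (set_type D k Neg) K m t
       = (t powr (1/2) - t powr (-1/2)) * jonesV (set_type D k Zero) K (m - 1) t"
proof -
  define A where "A = t powr (1/4)"
  have A: "A > 0" using t by (simp add: A_def)
  define x where "x = fst (sites D ! k)"
  define F0 where "F0 = full_sites D K - {k}"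
  have fin: "finite F0" by (rule finite_subset[of _ "{..<length (sites D)}"]) (auto simp: full_sites_def F0_def)
  have kF: "k \<notin> F0" by (simp add: F0_def)
  have FP: "full_sites (set_type D k Pos) K = insert k F0" and FN: "full_sites (set_type D k Neg) K = insert k F0"
    and FZ: "full_sites (set_type D k Zero) K = F0"
    using K unfolding full_sites_set_type[OF k] F0_def by auto
  define w0 where "w0 = writhe (set_type D k Zero) K"
  have WP: "writhe (set_type D k Pos) K = w0 + 1" and WN: "writhe (set_type D k Neg) K = w0 - 1"
    using K unfolding w0_def writhe_set_type[OF k] by auto
  define \<delta> where "\<delta> = - A\<^sup>2 - A powi (-2)"
  define Z where "Z = (\<lambda>T. \<delta> powi (int (state_loops (set_type D k Zero) K T) - 1))"
  define B where "B = (\<lambda>T. \<delta> powi (int (state_loops (set_type D k Pos) K T) - 1))"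
  have lab: "site_lab x 0 \<in> K" "site_lab x 1 \<in> K" "site_lab x 2 \<in> K" "site_lab x 3 \<in> K" using K by (auto simp: x_def)
  have eZ: "site_edges K a x Zero = {(site_lab x 0, site_lab x 1), (site_lab x 3, site_lab x 2)}" for a
    using lab by (simp add: site_edges_def Let_def)
  have ePT: "site_edges K True x Pos = {(site_lab x 0, site_lab x 1), (site_lab x 2, site_lab x 3)}"
    using lab by (simp add: site_edges_def Let_def)
  have eNF: "site_edges K False x Neg = {(site_lab x 0, site_lab x 1), (site_lab x 2, site_lab x 3)}"
    using lab by (simp add: site_edges_def Let_def)
  have ePF: "site_edges K False x Pos = site_edges K True x Neg"
    using lab by (simp add: site_edges_def Let_def)
  have L1: "state_loops (set_type D k Pos) K (insert k T) = state_loops (set_type D k Zero) K T" if "k \<notin> T" for T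
    by (rule loops_eq[OF k]) (use that in \<open>auto simp: eZ ePT x_def[symmetric]\<close>)
  have L2: "state_loops (set_type D k Neg) K T = state_loops (set_type D k Zero) K T" if "k \<notin> T" for T
    by (rule loops_eq[OF k]) (use that in \<open>auto simp: eZ eNF x_def[symmetric]\<close>)
  have L3: "state_loops (set_type D k Neg) K (insert k T) = state_loops (set_type D k Pos) K T" if "k \<notin> T" for T
    by (rule loops_eq[OF k]) (use that in \<open>auto simp: ePF x_def[symmetric]\<close>)
  define br0 where "br0 = bracket (set_type D k Zero) K A"
  define binf where "binf = (\<Sum>T\<in>Pow F0. A powi (int (card T) - int (card (F0 - T))) * B T)"
  have b0: "br0 = (\<Sum>T\<in>Pow F0. A powi (int (card T) - int (card (F0 - T))) * Z T)"
    unfolding br0_def bracket_def FZ Z_def \<delta>_def ..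
  have bP: "bracket (set_type D k Pos) K A = A * br0 + inverse A * binf"
  proof -
    have "bracket (set_type D k Pos) K A = (\<Sum>T\<in>Pow (insert k F0). A powi (int (card T) - int (card (insert k F0 - T))) * B T)"
      unfolding bracket_def FP B_def \<delta>_def ..
    also have "\<dots> = (\<Sum>T\<in>Pow F0. A powi (int (card T) - int (card (F0 - T))) * (A * B (insert k T) + inverse A * B T))"
      using A kF fin by (intro bracket_split) auto
    also have "\<dots> = (\<Sum>T\<in>Pow F0. A powi (int (card T) - int (card (F0 - T))) * (A * Z T + inverse A * B T))"
    proof (rule sum.cong[OF refl])
      fix T assume "T \<in> Pow F0"
      then have "k \<notin> T" using kF by auto
      then show "A powi (int (card T) - int (card (F0 - T))) * (A * B (insert k T) + inverse A * B T)
         = A powi (int (card T) - int (card (F0 - T))) * (A * Z T + inverse A * B T)"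
        by (simp add: B_def Z_def L1)
    qed
    finally show ?thesis unfolding b0 binf_def by (simp add: sum.distrib sum_distrib_left algebra_simps)
  qed
  have bN: "bracket (set_type D k Neg) K A = inverse A * br0 + A * binf"
  proof -
    have "bracket (set_type D k Neg) K A = (\<Sum>T\<in>Pow (insert k F0). A powi (int (card T) - int (card (insert k F0 - T)))
       * \<delta> powi (int (state_loops (set_type D k Neg) K T) - 1))"
      unfolding bracket_def FN \<delta>_def ..
    also have "\<dots> = (\<Sum>T\<in>Pow F0. A powi (int (card T) - int (card (F0 - T))) *
       (A * \<delta> powi (int (state_loops (set_type D k Neg) K (insert k T)) - 1) + inverse A * \<delta> powi (int (state_loops (set_type D k Neg) K T) - 1)))"
      using A kF fin by (intro bracket_split) auto
    also have "\<dots> = (\<Sum>T\<in>Pow F0. A powi (int (card T) - int (card (F0 - T))) * (A * B T + inverse A * Z T))"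
    proof (rule sum.cong[OF refl])
      fix T assume "T \<in> Pow F0"
      then have "k \<notin> T" using kF by auto
      then show "A powi (int (card T) - int (card (F0 - T))) *
       (A * \<delta> powi (int (state_loops (set_type D k Neg) K (insert k T)) - 1) + inverse A * \<delta> powi (int (state_loops (set_type D k Neg) K T) - 1))
         = A powi (int (card T) - int (card (F0 - T))) * (A * B T + inverse A * Z T)"
        by (simp add: B_def Z_def L2 L3)
    qed
    finally show ?thesis unfolding b0 binf_def by (simp add: sum.distrib sum_distrib_left algebra_simps)
  qed
  have t4: "t = A^4" using t unfolding A_def by (simp add: powr_realpow[symmetric] powr_powr)
  have t2: "t powr (1/2) = A^2" "t powr (-1/2) = inverse (A^2)"
    using t unfolding A_def by (simp_all add: powr_realpow[symmetric] powr_powr powr_minus[symmetric])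
  have m1: "m - 1 + 1 = m" using m by simp
  have "t * jonesV (set_type D k Pos) K m t - inverse t * jonesV (set_type D k Neg) K m t
     = A^4 * ((-1)^(m+1) * ((-1) powi (w0+1) * A powi (-3*(w0+1))) * (A*br0 + inverse A * binf))
     - inverse (A^4) * ((-1)^(m+1) * ((-1) powi (w0-1) * A powi (-3*(w0-1))) * (inverse A * br0 + A * binf))"
    unfolding jonesV_def Let_def A_def[symmetric] WP WN bP bN t4[symmetric] by simp
  also have "\<dots> = (A^2 - inverse (A^2)) * ((-1)^m * ((-1) powi w0 * A powi (-3*w0)) * br0)"
    by (rule skein_alg[OF A])
  also have "\<dots> = (t powr (1/2) - t powr (-1/2)) * jonesV (set_type D k Zero) K (m - 1) t"
    unfolding jonesV_def Let_def A_def[symmetric] w0_def[symmetric] br0_def[symmetric] t2 m1 ..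
  finally show ?thesis .
qed

subsection \<open>Equivalence closure\<close>

lemma ec_refl[simp]: "(x, x) \<in> equiv_cl R" by (simp add: equiv_cl_def)
lemma ec_sym: "(x, y) \<in> equiv_cl R \<Longrightarrow> (y, x) \<in> equiv_cl R"
  unfolding equiv_cl_def by (metis sym_rtrancl[OF sym_Un_converse[of R]] symD)
lemma ec_trans: "(x, y) \<in> equiv_cl R \<Longrightarrow> (y, z) \<in> equiv_cl R \<Longrightarrow> (x, z) \<in> equiv_cl R"
  unfolding equiv_cl_def by (rule rtrancl_trans)
lemma ec_base: "(x, y) \<in> R \<Longrightarrow> (x, y) \<in> equiv_cl R"
  unfolding equiv_cl_def by auto
lemma ec_sub: "A \<subseteq> equiv_cl B \<Longrightarrow> equiv_cl A \<subseteq> equiv_cl B"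
proof -
  assume A: "A \<subseteq> equiv_cl B"
  have "A \<union> A\<inverse> \<subseteq> equiv_cl B"
  proof
    fix z assume "z \<in> A \<union> A\<inverse>"
    moreover obtain x y where z: "z = (x, y)" by (cases z)
    ultimately show "z \<in> equiv_cl B" using A ec_sym by (metis Un_iff converse_iff subsetD)
  qed
  then show ?thesis unfolding equiv_cl_def by (rule rtrancl_subset_rtrancl)
qed
lemma ec_mono: "A \<subseteq> B \<Longrightarrow> equiv_cl A \<subseteq> equiv_cl B"
  by (rule ec_sub) (auto intro: ec_base)

lemma ec_class_eq: "(x, y) \<in> equiv_cl R \<Longrightarrow> equiv_cl R `` {x} = equiv_cl R `` {y}"
proof (rule set_eqI)
  fix z assume xy: "(x, y) \<in> equiv_cl R"
  show "z \<in> equiv_cl R `` {x} \<longleftrightarrow> z \<in> equiv_cl R `` {y}"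
    using ec_trans[OF ec_sym[OF xy], of z] ec_trans[OF xy, of z] by auto
qed

lemma quot_rep: "K \<in> A // equiv_cl R \<Longrightarrow> y \<in> K \<Longrightarrow> K = equiv_cl R `` {y}"
proof -
  assume "K \<in> A // equiv_cl R" "y \<in> K"
  then obtain x where K: "K = equiv_cl R `` {x}" unfolding quotient_def by auto
  with \<open>y \<in> K\<close> have xy: "(x, y) \<in> equiv_cl R" by simp
  show ?thesis by (rule trans[OF K ec_class_eq[OF xy]])
qed

lemma quot_mem: "K \<in> A // equiv_cl R \<Longrightarrow> \<exists>x\<in>A. K = equiv_cl R `` {x} \<and> x \<in> K"
  unfolding quotient_def by auto

lemma quot_disj: "K \<in> A // equiv_cl R \<Longrightarrow> K' \<in> A // equiv_cl R \<Longrightarrow> y \<in> K \<Longrightarrow> y \<in> K' \<Longrightarrow> K = K'"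
  using quot_rep by metis

lemma ec_merge:
  "equiv_cl (R \<union> {(a, b)}) = equiv_cl R \<union>
     (equiv_cl R `` {a} \<union> equiv_cl R `` {b}) \<times> (equiv_cl R `` {a} \<union> equiv_cl R `` {b})"
  (is "?L = ?E \<union> ?B \<times> ?B")
proof
  show "?E \<union> ?B \<times> ?B \<subseteq> ?L"
  proof -
    have E: "?E \<subseteq> ?L" by (rule ec_mono) auto
    have ab: "(a, b) \<in> ?L" by (rule ec_base) auto
    have "(u, v) \<in> ?L" if "u \<in> ?B" "v \<in> ?B" for u v
    proof -
      have "(u, a) \<in> ?L \<or> (u, b) \<in> ?L" "(a, v) \<in> ?L \<or> (b, v) \<in> ?L"
        using that E by (auto intro: ec_sym)
      then show ?thesis using ab by (meson ec_sym ec_trans)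
    qed
    then show ?thesis using E by auto
  qed
next
  have "(x, y) \<in> ?E \<union> ?B \<times> ?B" if "(x, y) \<in> (R \<union> {(a, b)} \<union> (R \<union> {(a, b)})\<inverse>)\<^sup>*" for x y
    using that
  proof (induction rule: rtrancl_induct)
    case base then show ?case by simp
  next
    case (step y z)
    have yz: "(y, z) \<in> ?E \<or> (y, z) \<in> ?B \<times> ?B"
      using step(2) by (auto intro: ec_base ec_sym)
    from step(3) yz show ?case
      by (elim disjE) (auto intro: ec_trans ec_sym simp: Image_iff)
  qed
  then show "?L \<subseteq> ?E \<union> ?B \<times> ?B" by (auto simp: equiv_cl_def)
qed


subsection \<open>Structure of well-formed diagrams\<close>

abbreviation lb :: "diagram \<Rightarrow> nat \<Rightarrow> nat \<Rightarrow> nat" where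
  "lb D j i \<equiv> site_lab (fst (sites D ! j)) i"

lemma distinct_of_count: "(\<forall>a. count_list xs a \<le> 1) \<Longrightarrow> distinct xs"
proof (induction xs)
  case Nil then show ?case by simp
next
  case (Cons x xs)
  have "count_list xs x = 0" using Cons.prems[rule_format, of x] by simp
  moreover have "\<forall>a. count_list xs a \<le> 1" using Cons.prems by (metis count_list.simps(2) le_trans le_add1)
  ultimately show ?case using Cons.IH by (simp add: count_list_0_iff)
qed

lemma concat_pairs:
  fixes f g :: "'a \<Rightarrow> 'b"
  shows "length (concat (map (\<lambda>y. [f y, g y]) xs)) = 2 * length xs"
    and "j < length xs \<Longrightarrow> concat (map (\<lambda>y. [f y, g y]) xs) ! (2*j) = f (xs ! j)"
    and "j < length xs \<Longrightarrow> concat (map (\<lambda>y. [f y, g y]) xs) ! (2*j+1) = g (xs ! j)"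
proof -
  show "length (concat (map (\<lambda>y. [f y, g y]) xs)) = 2 * length xs"
    by (induction xs) auto
  show "j < length xs \<Longrightarrow> concat (map (\<lambda>y. [f y, g y]) xs) ! (2*j) = f (xs ! j)"
    by (induction xs arbitrary: j) (auto simp: less_Suc_eq_0_disj)
  show "j < length xs \<Longrightarrow> concat (map (\<lambda>y. [f y, g y]) xs) ! (2*j+1) = g (xs ! j)"
    by (induction xs arbitrary: j) (auto simp: less_Suc_eq_0_disj)
qed

lemma in_ends_alt: "in_ends D = concat (map (\<lambda>y. [site_lab (fst y) 0, site_lab (fst y) 3]) (sites D))"
  unfolding in_ends_def by (simp add: split_def)

lemma out_ends_alt: "out_ends D = concat (map (\<lambda>y. [site_lab (fst y) 1, site_lab (fst y) 2]) (sites D))"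
  unfolding out_ends_def by (simp add: split_def)

lemma set_pairs: "set (concat (map (\<lambda>y. [f y, g y]) xs)) = {f (xs ! j) | j. j < length xs} \<union> {g (xs ! j) | j. j < length xs}"
proof -
  have "set (concat (map (\<lambda>y. [f y, g y]) xs)) = f ` set xs \<union> g ` set xs" by auto
  also have "set xs = {xs ! i |i. i < length xs}" by (rule set_conv_nth)
  finally show ?thesis by blast
qed

lemma set_in_ends: "set (in_ends D) = {lb D j 0 | j. j < length (sites D)} \<union> {lb D j 3 | j. j < length (sites D)}"
  unfolding in_ends_alt set_pairs ..

lemma set_out_ends: "set (out_ends D) = {lb D j 1 | j. j < length (sites D)} \<union> {lb D j 2 | j. j < length (sites D)}"
  unfolding out_ends_alt set_pairs ..

lemma wf_distinct_in: "wf_diagram D \<Longrightarrow> distinct (in_ends D)"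
  unfolding wf_diagram_def by (intro distinct_of_count) auto

lemma wf_distinct_out: "wf_diagram D \<Longrightarrow> distinct (out_ends D)"
proof (intro distinct_of_count allI)
  fix a assume "wf_diagram D"
  then have "count_list (in_ends D) a = count_list (out_ends D) a" "count_list (in_ends D) a \<le> 1"
    unfolding wf_diagram_def by auto
  then show "count_list (out_ends D) a \<le> 1" by simp
qed

lemma wf_set_out: "wf_diagram D \<Longrightarrow> set (out_ends D) = set (in_ends D)"
proof -
  assume "wf_diagram D"
  then have "\<forall>a. count_list (in_ends D) a = count_list (out_ends D) a" unfolding wf_diagram_def by auto
  then have "x \<in> set (out_ends D) \<longleftrightarrow> x \<in> set (in_ends D)" for x
    using count_list_0_iff[of "out_ends D" x] count_list_0_iff[of "in_ends D" x] by metis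
  then show ?thesis by blast
qed

lemma wf_in_arcs: "wf_diagram D \<Longrightarrow> set (in_ends D) \<subseteq> arcs D"
  unfolding wf_diagram_def by simp

lemma wf_in_inj:
  assumes wf: "wf_diagram D" and j: "j < length (sites D)" and j': "j' < length (sites D)"
  shows "lb D j 0 = lb D j' 0 \<Longrightarrow> j = j'" and "lb D j 3 = lb D j' 3 \<Longrightarrow> j = j'" and "lb D j 0 \<noteq> lb D j' 3"
proof -
  let ?xs = "in_ends D"
  have d: "distinct ?xs" using wf_distinct_in[OF wf] .
  have len: "length ?xs = 2 * length (sites D)" unfolding in_ends_alt by (rule concat_pairs(1))
  have n0: "?xs ! (2*i) = lb D i 0" if "i < length (sites D)" for i
    using concat_pairs(2)[OF that, of "\<lambda>y. site_lab (fst y) 0" "\<lambda>y. site_lab (fst y) 3"] unfolding in_ends_alt by simp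
  have n3: "?xs ! (2*i+1) = lb D i 3" if "i < length (sites D)" for i
    using concat_pairs(3)[OF that, of "\<lambda>y. site_lab (fst y) 0" "\<lambda>y. site_lab (fst y) 3"] unfolding in_ends_alt by simp
  show "lb D j 0 = lb D j' 0 \<Longrightarrow> j = j'"
    using nth_eq_iff_index_eq[OF d, of "2*j" "2*j'"] n0[OF j] n0[OF j'] len j j' by simp
  show "lb D j 3 = lb D j' 3 \<Longrightarrow> j = j'"
    using nth_eq_iff_index_eq[OF d, of "2*j+1" "2*j'+1"] n3[OF j] n3[OF j'] len j j' by simp
  show "lb D j 0 \<noteq> lb D j' 3"
    using nth_eq_iff_index_eq[OF d, of "2*j" "2*j'+1"] n0[OF j] n3[OF j'] len j j' by simp presburger
qed

lemma wf_out_inj: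
  assumes wf: "wf_diagram D" and j: "j < length (sites D)" and j': "j' < length (sites D)"
  shows "lb D j 1 = lb D j' 1 \<Longrightarrow> j = j'" and "lb D j 2 = lb D j' 2 \<Longrightarrow> j = j'" and "lb D j 1 \<noteq> lb D j' 2"
proof -
  let ?xs = "out_ends D"
  have d: "distinct ?xs" using wf_distinct_out[OF wf] .
  have len: "length ?xs = 2 * length (sites D)" unfolding out_ends_alt by (rule concat_pairs(1))
  have n0: "?xs ! (2*i) = lb D i 1" if "i < length (sites D)" for i
    using concat_pairs(2)[OF that, of "\<lambda>y. site_lab (fst y) 1" "\<lambda>y. site_lab (fst y) 2"] unfolding out_ends_alt by simp
  have n3: "?xs ! (2*i+1) = lb D i 2" if "i < length (sites D)" for i
    using concat_pairs(3)[OF that, of "\<lambda>y. site_lab (fst y) 1" "\<lambda>y. site_lab (fst y) 2"] unfolding out_ends_alt by simp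
  show "lb D j 1 = lb D j' 1 \<Longrightarrow> j = j'"
    using nth_eq_iff_index_eq[OF d, of "2*j" "2*j'"] n0[OF j] n0[OF j'] len j j' by simp
  show "lb D j 2 = lb D j' 2 \<Longrightarrow> j = j'"
    using nth_eq_iff_index_eq[OF d, of "2*j+1" "2*j'+1"] n3[OF j] n3[OF j'] len j j' by simp
  show "lb D j 1 \<noteq> lb D j' 2"
    using nth_eq_iff_index_eq[OF d, of "2*j" "2*j'+1"] n0[OF j] n3[OF j'] len j j' by simp presburger
qed

lemma strand_rel_nth: "strand_rel D = (\<Union>j\<in>{..<length (sites D)}. site_strands (fst (sites D ! j)) (snd (sites D ! j)))"
  unfolding strand_rel_def by (auto simp: set_conv_nth split_def)

lemma site_strands_iff: "(a, b) \<in> site_strands x c \<longleftrightarrow>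
   (a = site_lab x 0 \<and> b = (if c = Zero then site_lab x 1 else site_lab x 2)) \<or>
   (a = site_lab x 3 \<and> b = (if c = Zero then site_lab x 2 else site_lab x 1))"
  unfolding site_strands_def by auto

lemma strand_rel_iff: "(a, b) \<in> strand_rel D \<longleftrightarrow> (\<exists>j<length (sites D).
   (a = lb D j 0 \<and> b = (if snd (sites D ! j) = Zero then lb D j 1 else lb D j 2)) \<or>
   (a = lb D j 3 \<and> b = (if snd (sites D ! j) = Zero then lb D j 2 else lb D j 1)))"
  by (auto simp add: strand_rel_nth site_strands_iff)

lemma strand_func:
  assumes wf: "wf_diagram D" and ab: "(a, b) \<in> strand_rel D" and ab': "(a, b') \<in> strand_rel D"
  shows "b = b'"
proof -
  obtain j where j: "j < length (sites D)" and
    h: "(a = lb D j 0 \<and> b = (if snd (sites D ! j) = Zero then lb D j 1 else lb D j 2)) \<or>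
        (a = lb D j 3 \<and> b = (if snd (sites D ! j) = Zero then lb D j 2 else lb D j 1))"
    using ab unfolding strand_rel_iff by blast
  obtain j' where j': "j' < length (sites D)" and
    h': "(a = lb D j' 0 \<and> b' = (if snd (sites D ! j') = Zero then lb D j' 1 else lb D j' 2)) \<or>
        (a = lb D j' 3 \<and> b' = (if snd (sites D ! j') = Zero then lb D j' 2 else lb D j' 1))"
    using ab' unfolding strand_rel_iff by blast
  note I = wf_in_inj[OF wf j j'] wf_in_inj[OF wf j' j]
  from h h' show ?thesis
  proof (elim disjE conjE)
    assume "a = lb D j 0" "a = lb D j' 0" then have "j = j'" using I(1) by simp
    moreover assume "b = (if snd (sites D ! j) = Zero then lb D j 1 else lb D j 2)" "b' = (if snd (sites D ! j') = Zero then lb D j' 1 else lb D j' 2)"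
    ultimately show ?thesis by simp
  next
    assume "a = lb D j 3" "a = lb D j' 3" then have "j = j'" using I(2) by simp
    moreover assume "b = (if snd (sites D ! j) = Zero then lb D j 2 else lb D j 1)" "b' = (if snd (sites D ! j') = Zero then lb D j' 2 else lb D j' 1)"
    ultimately show ?thesis by simp
  qed (use I in auto)
qed

lemma strand_inj:
  assumes wf: "wf_diagram D" and ab: "(a, b) \<in> strand_rel D" and ab': "(a', b) \<in> strand_rel D"
  shows "a = a'"
proof -
  obtain j where j: "j < length (sites D)" and
    h: "(a = lb D j 0 \<and> b = (if snd (sites D ! j) = Zero then lb D j 1 else lb D j 2)) \<or>
        (a = lb D j 3 \<and> b = (if snd (sites D ! j) = Zero then lb D j 2 else lb D j 1))"
    using ab unfolding strand_rel_iff by blast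
  obtain j' where j': "j' < length (sites D)" and
    h': "(a' = lb D j' 0 \<and> b = (if snd (sites D ! j') = Zero then lb D j' 1 else lb D j' 2)) \<or>
        (a' = lb D j' 3 \<and> b = (if snd (sites D ! j') = Zero then lb D j' 2 else lb D j' 1))"
    using ab' unfolding strand_rel_iff by blast
  note I = wf_out_inj[OF wf j j'] wf_out_inj[OF wf j' j]
  show ?thesis
  proof (cases "snd (sites D ! j) = Zero"; cases "snd (sites D ! j') = Zero")
  qed (use h h' I in \<open>auto\<close>)
qed

lemma strand_dom: "a \<in> set (in_ends D) \<Longrightarrow> \<exists>b. (a, b) \<in> strand_rel D"
  unfolding strand_rel_iff set_in_ends by blast

lemma strand_ran: "wf_diagram D \<Longrightarrow> (a, b) \<in> strand_rel D \<Longrightarrow> b \<in> set (in_ends D)"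
  unfolding wf_set_out[symmetric] by (auto simp: strand_rel_iff set_out_ends)

lemma strand_rel_set_type_nz:
  assumes k: "k < length (sites D)" and c: "c \<noteq> Zero" and ck: "snd (sites D ! k) \<noteq> Zero"
  shows "strand_rel (set_type D k c) = strand_rel D"
  unfolding strand_rel_nth set_type_len
  by (rule SUP_cong[OF refl]) (use k c ck in \<open>auto simp: set_type_nth site_strands_def\<close>)

lemma comps_set_type_nz:
  assumes k: "k < length (sites D)" and c: "c \<noteq> Zero" and ck: "snd (sites D ! k) \<noteq> Zero"
  shows "comps (set_type D k c) = comps D"
  unfolding comps_def strand_rel_set_type_nz[OF assms] by simp

lemma strand_rel_split:
  assumes k: "k < length (sites D)"
  shows "strand_rel (set_type D k c) = site_strands (fst (sites D ! k)) c \<union>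
           (\<Union>j\<in>{..<length (sites D)} - {k}. site_strands (fst (sites D ! j)) (snd (sites D ! j)))"
    and "strand_rel D = site_strands (fst (sites D ! k)) (snd (sites D ! k)) \<union>
           (\<Union>j\<in>{..<length (sites D)} - {k}. site_strands (fst (sites D ! j)) (snd (sites D ! j)))"
proof -
  show "strand_rel D = site_strands (fst (sites D ! k)) (snd (sites D ! k)) \<union>
           (\<Union>j\<in>{..<length (sites D)} - {k}. site_strands (fst (sites D ! j)) (snd (sites D ! j)))"
    unfolding strand_rel_nth by (rule UN_split_k[OF k])
  have "strand_rel (set_type D k c) = site_strands (fst (sites (set_type D k c) ! k)) (snd (sites (set_type D k c) ! k)) \<union>
           (\<Union>j\<in>{..<length (sites D)} - {k}. site_strands (fst (sites (set_type D k c) ! j)) (snd (sites (set_type D k c) ! j)))"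
    unfolding strand_rel_nth set_type_len by (rule UN_split_k[OF k])
  also have "\<dots> = site_strands (fst (sites D ! k)) c \<union>
           (\<Union>j\<in>{..<length (sites D)} - {k}. site_strands (fst (sites D ! j)) (snd (sites D ! j)))"
    using k by (simp add: set_type_nth)
  finally show "strand_rel (set_type D k c) = site_strands (fst (sites D ! k)) c \<union>
           (\<Union>j\<in>{..<length (sites D)} - {k}. site_strands (fst (sites D ! j)) (snd (sites D ! j)))" .
qed


subsection \<open>Orbits\<close>

lemma inj_on_funpow: "inj_on f S \<Longrightarrow> f ` S \<subseteq> S \<Longrightarrow> inj_on (f ^^ i) S"
proof (induction i)
  case 0 then show ?case by simp
next
  case (Suc i)
  have "(f ^^ i) ` S \<subseteq> S" using Suc.prems by (induction i) auto
  then have "inj_on (f \<circ> (f ^^ i)) S"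
    by (intro comp_inj_on[OF Suc.IH[OF Suc.prems]] inj_on_subset[OF Suc.prems(1)])
  then show ?case by (simp add: o_def)
qed

lemma funpow_in: "f ` S \<subseteq> S \<Longrightarrow> a \<in> S \<Longrightarrow> (f ^^ i) a \<in> S"
  by (induction i) auto

lemma orbit_return:
  assumes fin: "finite S" and fS: "f ` S \<subseteq> S" and inj: "inj_on f S" and a: "a \<in> S"
  shows "\<exists>n\<ge>1. (f ^^ n) a = a"
proof -
  let ?g = "\<lambda>i. (f ^^ i) a"
  have "\<not> inj_on ?g {..card S}"
  proof
    assume "inj_on ?g {..card S}"
    moreover have "?g ` {..card S} \<subseteq> S" using funpow_in[OF fS a] by auto
    ultimately have "card {..card S} \<le> card S" using card_inj_on_le[OF _ _ fin] by blast
    then show False by simp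
  qed
  then obtain i j where ij: "i \<le> card S" "j \<le> card S" "i \<noteq> j" "?g i = ?g j"
    unfolding inj_on_def by auto
  then have "\<exists>i j. i < j \<and> ?g i = ?g j" by (metis linorder_neqE_nat)
  then obtain i j where ij: "i < j" "?g i = ?g j" by blast
  have "?g j = (f ^^ i) ((f ^^ (j - i)) a)" using ij(1)
    by (metis funpow_add le_add_diff_inverse less_imp_le o_apply)
  then have "(f ^^ i) a = (f ^^ i) ((f ^^ (j - i)) a)" using ij by simp
  then have "a = (f ^^ (j - i)) a"
    using inj_on_funpow[OF inj fS, of i] funpow_in[OF fS a] a unfolding inj_on_def by blast
  then show ?thesis using ij(1) by (intro exI[of _ "j - i"]) auto
qed

lemma cycle_back_abs:
  fixes R R0 :: "('a \<times> 'a) set"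
  assumes fin: "finite S"
    and func: "\<And>u v v'. (u, v) \<in> R \<Longrightarrow> (u, v') \<in> R \<Longrightarrow> v = v'"
    and inj: "\<And>u u' v. (u, v) \<in> R \<Longrightarrow> (u', v) \<in> R \<Longrightarrow> u = u'"
    and dom: "\<And>u. u \<in> S \<Longrightarrow> \<exists>v. (u, v) \<in> R"
    and ran: "\<And>u v. (u, v) \<in> R \<Longrightarrow> v \<in> S"
    and a: "a \<in> S" and ab: "(a, b) \<in> R"
    and keep: "\<And>u v. (u, v) \<in> R \<Longrightarrow> (a, u) \<in> equiv_cl R \<Longrightarrow> u \<noteq> a \<Longrightarrow> (u, v) \<in> R0"
  shows "(b, a) \<in> equiv_cl R0"
proof -
  define f where "f u = (THE v. (u, v) \<in> R)" for u
  have fv: "f u = v" if uv: "(u, v) \<in> R" for u v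
    unfolding f_def by (rule the_equality[where P="\<lambda>v. (u, v) \<in> R", OF uv]) (use func uv in blast)
  have fR: "(u, f u) \<in> R" if uS: "u \<in> S" for u
  proof -
    obtain v where "(u, v) \<in> R" using dom[OF uS] by blast
    then show ?thesis using fv by simp
  qed
  have fS: "f ` S \<subseteq> S" using fR ran by blast
  have finj: "inj_on f S" unfolding inj_on_def using fR inj by metis
  obtain n where n: "n \<ge> 1" "(f ^^ n) a = a" using orbit_return[OF fin fS finj a] by blast
  have fa: "f a = b" using fv[OF ab] .
  have "(b, (f ^^ i) a) \<in> equiv_cl R0 \<and> (a, (f ^^ i) a) \<in> equiv_cl R" if "i \<ge> 1" for i
    using that
  proof (induction i rule: dec_induct)
    case base then show ?case using fa ab by (auto intro: ec_base)
  next
    case (step i)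
    let ?u = "(f ^^ i) a"
    have uS: "?u \<in> S" using funpow_in[OF fS a] .
    have uv: "(?u, f ?u) \<in> R" using fR[OF uS] .
    show ?case
    proof (cases "?u = a")
      case True
      then have "(f ^^ Suc i) a = b" using fa by simp
      then show ?thesis using ab by (auto intro: ec_base)
    next
      case False
      have "(?u, f ?u) \<in> R0" using keep[OF uv] step.IH False by blast
      then show ?thesis using step.IH uv by (auto intro: ec_trans ec_base)
    qed
  qed
  from this[OF n(1)] n(2) show ?thesis by simp
qed


subsection \<open>Components after smoothing\<close>

lemma comps_smooth:
  assumes wf: "wf_diagram D" and k: "k < length (sites D)" and ck: "snd (sites D ! k) \<noteq> Zero"
    and K1: "K1 \<in> comps D" and K2: "K2 \<in> comps D" and ne: "K1 \<noteq> K2"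
    and p: "lb D k 0 \<in> K1" and s: "lb D k 3 \<in> K2"
  shows "comps (set_type D k Zero) = insert (K1 \<union> K2) (comps D - {K1, K2})"
    and "lb D k 2 \<in> K1" and "lb D k 1 \<in> K2"
proof -
  define p q r s' where "p = lb D k 0" and "q = lb D k 1" and "r = lb D k 2" and "s' = lb D k 3"
  define R where "R = strand_rel D"
  define R0 where "R0 = strand_rel (set_type D k Zero)"
  define Rest where "Rest = (\<Union>j\<in>{..<length (sites D)} - {k}. site_strands (fst (sites D ! j)) (snd (sites D ! j)))"
  have R: "R = {(p, r), (s', q)} \<union> Rest"
    unfolding R_def Rest_def strand_rel_split(2)[OF k] using ck by (simp add: site_strands_def p_def q_def r_def s'_def)
  have R0: "R0 = {(p, q), (s', r)} \<union> Rest"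
    unfolding R0_def Rest_def strand_rel_split(1)[OF k] by (simp add: site_strands_def p_def q_def r_def s'_def)
  let ?E = "equiv_cl R"
  have cK1: "K1 \<in> arcs D // ?E" and cK2: "K2 \<in> arcs D // ?E" using K1 K2 by (simp_all add: comps_def R_def)
  have K1E: "K1 = ?E `` {p}" using quot_rep[OF cK1] p by (simp add: p_def)
  have K2E: "K2 = ?E `` {s'}" using quot_rep[OF cK2] s by (simp add: s'_def)
  have sK1: "s' \<notin> K1" using quot_disj[OF cK1 cK2] s ne by (auto simp: s'_def)
  have pK2: "p \<notin> K2" using quot_disj[OF cK1 cK2] p ne by (auto simp: p_def)
  have rK1: "r \<in> K1" unfolding K1E using R by (auto intro: ec_base)
  have qK2: "q \<in> K2" unfolding K2E using R by (auto intro: ec_base)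
  then show "lb D k 2 \<in> K1" "lb D k 1 \<in> K2" using rK1 by (simp_all add: r_def q_def)
  define S where "S = set (in_ends D)"
  have finS: "finite S" by (simp add: S_def)
  have pS: "p \<in> S" and sS: "s' \<in> S" using k by (auto simp: S_def set_in_ends p_def s'_def)
  have func: "\<And>u v v'. (u, v) \<in> R \<Longrightarrow> (u, v') \<in> R \<Longrightarrow> v = v'" using strand_func[OF wf] R_def by blast
  have inj: "\<And>u u' v. (u, v) \<in> R \<Longrightarrow> (u', v) \<in> R \<Longrightarrow> u = u'" using strand_inj[OF wf] R_def by blast
  have dom: "\<And>u. u \<in> S \<Longrightarrow> \<exists>v. (u, v) \<in> R" using strand_dom S_def R_def by blast
  have ran: "\<And>u v. (u, v) \<in> R \<Longrightarrow> v \<in> S" using strand_ran[OF wf] S_def R_def by blast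
  have back1: "(r, p) \<in> equiv_cl R0"
  proof (rule cycle_back_abs[OF finS func inj dom ran pS])
    show "(p, r) \<in> R" using R by simp
    fix u v assume uv: "(u, v) \<in> R" and pu: "(p, u) \<in> ?E" and up: "u \<noteq> p"
    have "u \<noteq> s'" using pu sK1 K1E by auto
    then show "(u, v) \<in> R0" using uv up unfolding R R0 by auto
  qed
  have back2: "(q, s') \<in> equiv_cl R0"
  proof (rule cycle_back_abs[OF finS func inj dom ran sS])
    show "(s', q) \<in> R" using R by simp
    fix u v assume uv: "(u, v) \<in> R" and pu: "(s', u) \<in> ?E" and up: "u \<noteq> s'"
    have "u \<noteq> p" using pu pK2 K2E by auto
    then show "(u, v) \<in> R0" using uv up unfolding R R0 by auto
  qed
  have E0: "equiv_cl R0 = equiv_cl (R \<union> {(p, q)})"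
  proof (rule antisym)
    show "equiv_cl R0 \<subseteq> equiv_cl (R \<union> {(p, q)})"
    proof (rule ec_sub)
      have a: "(p, q) \<in> equiv_cl (R \<union> {(p, q)})" by (rule ec_base) simp
      have b: "(s', q) \<in> equiv_cl (R \<union> {(p, q)})" by (rule ec_base) (simp add: R)
      have c: "(p, r) \<in> equiv_cl (R \<union> {(p, q)})" by (rule ec_base) (simp add: R)
      have "(s', r) \<in> equiv_cl (R \<union> {(p, q)})"
        using ec_trans[OF ec_trans[OF b ec_sym[OF a]] c] .
      moreover have "Rest \<subseteq> equiv_cl (R \<union> {(p, q)})" using R by (auto intro: ec_base)
      ultimately show "R0 \<subseteq> equiv_cl (R \<union> {(p, q)})" unfolding R0 using a by auto
    qed
    show "equiv_cl (R \<union> {(p, q)}) \<subseteq> equiv_cl R0"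
    proof (rule ec_sub)
      have "(p, q) \<in> equiv_cl R0" by (rule ec_base) (simp add: R0)
      moreover have "Rest \<subseteq> equiv_cl R0" using R0 by (auto intro: ec_base)
      ultimately show "R \<union> {(p, q)} \<subseteq> equiv_cl R0" unfolding R using ec_sym[OF back1] ec_sym[OF back2] by auto
    qed
  qed
  have qE: "?E `` {q} = K2" unfolding K2E by (rule ec_class_eq[symmetric]) (rule ec_base, simp add: R)
  have E0': "equiv_cl R0 = ?E \<union> (K1 \<union> K2) \<times> (K1 \<union> K2)"
    unfolding E0 ec_merge K1E qE ..
  have cls: "equiv_cl R0 `` {x} = (if x \<in> K1 \<union> K2 then K1 \<union> K2 else ?E `` {x})" for x
  proof (cases "x \<in> K1 \<union> K2")
    case True
    then have "?E `` {x} = K1 \<or> ?E `` {x} = K2" using quot_rep[OF cK1] quot_rep[OF cK2] by blast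
    then show ?thesis using True unfolding E0' by auto
  next
    case False
    then show ?thesis unfolding E0' by auto
  qed
  have pA: "p \<in> arcs D" using pS wf_in_arcs[OF wf] S_def by auto
  show "comps (set_type D k Zero) = insert (K1 \<union> K2) (comps D - {K1, K2})"
  proof (rule set_eqI)
    fix K
    show "K \<in> comps (set_type D k Zero) \<longleftrightarrow> K \<in> insert (K1 \<union> K2) (comps D - {K1, K2})"
    proof
      assume "K \<in> comps (set_type D k Zero)"
      then obtain x where x: "x \<in> arcs D" "K = equiv_cl R0 `` {x}"
        unfolding comps_def R0_def quotient_def by auto
      show "K \<in> insert (K1 \<union> K2) (comps D - {K1, K2})"
      proof (cases "x \<in> K1 \<union> K2")
        case True then show ?thesis using x cls by simp
      next
        case False
        then have "K = ?E `` {x}" using x cls by simp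
        moreover have "?E `` {x} \<in> comps D" using x by (auto simp: comps_def R_def quotient_def)
        moreover have "x \<in> ?E `` {x}" by simp
        ultimately show ?thesis using False by auto
      qed
    next
      assume K: "K \<in> insert (K1 \<union> K2) (comps D - {K1, K2})"
      show "K \<in> comps (set_type D k Zero)"
      proof (cases "K = K1 \<union> K2")
        case True
        then have "K = equiv_cl R0 `` {p}" using cls p by (simp add: p_def)
        then show ?thesis using pA by (auto simp: comps_def R0_def quotient_def)
      next
        case False
        then have KD: "K \<in> arcs D // ?E" "K \<noteq> K1" "K \<noteq> K2" using K by (auto simp: comps_def R_def)
        then obtain x where x: "x \<in> arcs D" "K = ?E `` {x}" "x \<in> K" using quot_mem by blast
        have "x \<notin> K1" using quot_disj[OF KD(1) cK1] x KD by blast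
        moreover have "x \<notin> K2" using quot_disj[OF KD(1) cK2] x KD by blast
        ultimately have "K = equiv_cl R0 `` {x}" using cls x by simp
        then show ?thesis using x by (auto simp: comps_def R0_def quotient_def)
      qed
    qed
  qed
qed

lemma smooth_quart: "smooth (\<lambda>t. t powr (1/4))" by (rule smooth_powr)

lemma finite_full_sites: "finite (full_sites D K)"
  by (rule finite_subset[of _ "{..<length (sites D)}"]) (auto simp: full_sites_def)

lemma smooth_bracket: "smooth (\<lambda>t. bracket D K (t powr (1/4)))"
proof -
  have q: "\<forall>x>0. x powr (1/4) \<noteq> (0::real)" by simp
  have dl: "smooth (\<lambda>t. - (t powr (1/4))\<^sup>2 - (t powr (1/4)) powi (-2))"
    by (intro smooth_diff smooth_uminus smooth_power smooth_powi smooth_quart q)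
  have dn: "\<forall>x>0. - (x powr (1/4))\<^sup>2 - (x powr (1/4)) powi (-2) \<noteq> (0::real)"
  proof (intro allI impI)
    fix x :: real assume "x > 0"
    then have "(x powr (1/4))\<^sup>2 > 0" "(x powr (1/4)) powi (-2) > 0" by auto
    then show "- (x powr (1/4))\<^sup>2 - (x powr (1/4)) powi (-2) \<noteq> 0" by linarith
  qed
  show ?thesis unfolding bracket_def
    by (intro smooth_sum smooth_mult smooth_powi smooth_quart q dl dn) (auto simp: finite_full_sites)
qed

lemma smooth_jonesV: "smooth (jonesV D K m)"
proof -
  have q: "\<forall>x>0. x powr (1/4) \<noteq> (0::real)" by simp
  have "smooth (\<lambda>t. (-1) ^ (m + 1) * ((-1) powi writhe D K * (t powr (1/4)) powi (-3 * writhe D K)) * bracket D K (t powr (1/4)))"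
    by (intro smooth_mult smooth_const smooth_powi smooth_quart q smooth_bracket)
  then show ?thesis unfolding jonesV_def Let_def by simp
qed

lemma s_pos: "t > 0 \<Longrightarrow> t powr (1/2) + t powr (-1/2) > (0::real)"
  by (simp add: add_pos_pos)

lemma smooth_Xinv: "smooth (Xinv D C)"
proof -
  have s: "smooth (\<lambda>t. t powr (1/2) + t powr (-1/2))" by (intro smooth_add smooth_powr)
  have sn: "\<forall>x>0. x powr (1/2) + x powr (-1/2) \<noteq> (0::real)" using s_pos by (metis less_irrefl)
  have "smooth (\<lambda>t. jonesV D (\<Union>C) (card C) t / (t powr (1/2) + t powr (-1/2)) powi (int (card C) - 1))"
    by (intro smooth_divide smooth_jonesV smooth_powi s sn) (use sn in \<open>auto intro: power_int_not_zero\<close>)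
  then show ?thesis unfolding Xinv_def by simp
qed

lemma smooth_Phi: "smooth (Phi D)"
proof (cases "ncomp D = 0")
  case True
  then have "Phi D = (\<lambda>t. 0)" by (simp add: Phi_def fun_eq_iff)
  then show ?thesis by (simp add: smooth_const)
next
  case False
  have fin: "finite (comps D)" using False by (simp add: ncomp_def card_ge_0_finite)
  have "smooth (\<lambda>t. \<Sum>C\<in>Pow (comps D). (-1) ^ (ncomp D - card C) * Xinv D C t)"
    using fin by (intro smooth_sum smooth_mult smooth_const smooth_Xinv) auto
  then show ?thesis using False unfolding Phi_def by (simp add: fun_eq_iff)
qed


lemma ratio_half: "(t::real) > 0 \<Longrightarrow> (t powr (1/2) - t powr (-1/2)) / (t powr (1/2) + t powr (-1/2)) = (t - 1) / (t + 1)"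
proof -
  assume t: "t > 0"
  define u where "u = t powr (1/2)"
  have u: "u > 0" using t by (simp add: u_def)
  have tu: "t = u^2" using t by (simp add: u_def powr_realpow[symmetric] powr_powr)
  have iu: "t powr (-1/2) = inverse u" using t by (simp add: u_def powr_minus[symmetric])
  have "(t powr (1/2) - t powr (-1/2)) / (t powr (1/2) + t powr (-1/2)) = (u - inverse u) / (u + inverse u)"
    by (simp only: iu u_def)
  also have "\<dots> = (u^2 - 1) / (u^2 + 1)"
  proof -
    have d1: "u + inverse u \<noteq> 0" using u by (metis add_pos_pos inverse_positive_iff_positive less_irrefl)
    have d2: "u^2 + 1 \<noteq> 0" by (metis add_pos_nonneg zero_less_one zero_le_power2 less_irrefl add.commute)
    have "(u - inverse u) * (u^2 + 1) = (u^2 - 1) * (u + inverse u)"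
      using u by (simp add: algebra_simps power2_eq_square)
    then show ?thesis by (simp add: frac_eq_eq[OF d1 d2])
  qed
  also have "\<dots> = (t - 1) / (t + 1)" by (simp only: tu)
  finally show ?thesis .
qed

lemma X_skein:
  assumes k: "k < length (sites D)"
    and l0: "lb D k 0 \<in> \<Union>C" and l1: "lb D k 1 \<in> \<Union>C" and l2: "lb D k 2 \<in> \<Union>C" and l3: "lb D k 3 \<in> \<Union>C"
    and c: "card C \<ge> 2" and t: "t > 0" and C'1: "card C' = card C - 1" and C'2: "\<Union>C' = \<Union>C"
  shows "t * Xinv (set_type D k Pos) C t - inverse t * Xinv (set_type D k Neg) C t
       = (t - 1) / (t + 1) * Xinv (set_type D k Zero) C' t"
proof -
  define s where "s = t powr (1/2) + t powr (-1/2)"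
  have s0: "s > 0" using s_pos[OF t] by (simp add: s_def)
  define V0 where "V0 = jonesV (set_type D k Zero) (\<Union>C) (card C - 1) t"
  have sk: "t * jonesV (set_type D k Pos) (\<Union>C) (card C) t - inverse t * jonesV (set_type D k Neg) (\<Union>C) (card C) t
       = (t powr (1/2) - t powr (-1/2)) * V0"
    unfolding V0_def by (rule jones_skein[OF k l0 l1 l2 l3 _ t]) (use c in simp)
  have e: "int (card C) - 1 = (int (card C - 1) - 1) + 1" using c by simp
  have sp: "s powi (int (card C) - 1) = s * s powi (int (card C - 1) - 1)"
    unfolding e by (rule powi_plus1) (use s0 in simp)
  have X0: "Xinv (set_type D k Zero) C' t = V0 / s powi (int (card C - 1) - 1)"
    unfolding Xinv_def C'1 C'2 V0_def s_def ..
  have "t * Xinv (set_type D k Pos) C t - inverse t * Xinv (set_type D k Neg) C t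
      = (t * jonesV (set_type D k Pos) (\<Union>C) (card C) t - inverse t * jonesV (set_type D k Neg) (\<Union>C) (card C) t) / s powi (int (card C) - 1)"
    unfolding Xinv_def s_def by (simp add: diff_divide_distrib)
  also have "\<dots> = ((t powr (1/2) - t powr (-1/2)) / s) * (V0 / s powi (int (card C - 1) - 1))"
    unfolding sk sp using s0 by simp
  also have "\<dots> = (t - 1) / (t + 1) * Xinv (set_type D k Zero) C' t"
    unfolding X0 s_def ratio_half[OF t] ..
  finally show ?thesis .
qed


lemma fa0:
  fixes a b c P n m f :: real
  assumes "n > 0" "m > 0" "f > 0"
  shows "P * a / (n * (m * f)) = - ((P / -2) / (m * f) * ((2 * a + 3 * n * b + n * m * c) / n))
      - 3/2 * (P / (m * f) * b) - 1/2 * (P / f * c)"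
  using assms by (simp add: field_simps)

lemma final_arith:
  fixes a b c g P :: real and N :: nat
  assumes N: "N \<ge> 2" and rel: "2 * a + 3 * real N * b + real N * (real N - 1) * c = real N * g"
  shows "P / fact N * a = - ((P / -2) / fact (N - 1) * g) - 3/2 * (P / fact (N - 1) * b) - 1/2 * (P / fact (N - 2) * c)"
proof -
  define f2 where "f2 = (fact (N - 2) :: real)"
  have f2: "f2 > 0" by (simp add: f2_def)
  obtain m where m: "N = Suc (Suc m)" using N by (cases N; cases "N - 1") auto
  have e1: "(fact (N - 1) :: real) = (real N - 1) * f2"
    unfolding m f2_def by (simp add: fact_Suc)
  have e2: "(fact N :: real) = real N * ((real N - 1) * f2)"
    unfolding m f2_def by (simp add: fact_Suc)
  have n1: "real N - 1 > 0" using N by simp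
  have n0: "real N > 0" using N by simp
  have g: "g = (2 * a + 3 * real N * b + real N * (real N - 1) * c) / real N"
    using rel n0 by (simp add: field_simps)
  have "P / fact N * a = P * a / (real N * ((real N - 1) * f2))" unfolding e2 by simp
  also have "\<dots> = - ((P / -2) / ((real N - 1) * f2) * ((2 * a + 3 * real N * b + real N * (real N - 1) * c) / real N))
      - 3/2 * (P / ((real N - 1) * f2) * b) - 1/2 * (P / f2 * c)"
    by (rule fa0[OF n0 n1 f2])
  also have "\<dots> = - ((P / -2) / fact (N - 1) * g) - 3/2 * (P / fact (N - 1) * b) - 1/2 * (P / fact (N - 2) * c)"
    unfolding e1 g f2_def ..
  finally show ?thesis .
qed

lemma part2:
  assumes rel: "\<forall>t>0. (t\<^sup>2 + t) * (Phi A t - Phi B t) = (t - 1) * (Phi C0 t - Phi D0 t)"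
    and nA: "ncomp A = Nc" and nB: "ncomp B = Nc" and nC: "ncomp C0 = Nc - 1" and nD: "ncomp D0 = Nc - 1"
    and Nc: "Nc \<ge> 2"
  shows "\<forall>i::int. i \<ge> 1 \<longrightarrow>
            phi A i - phi B i
          = - (phi C0 i - phi D0 i)
            - 3/2 * (phi A (i - 1) - phi B (i - 1))
            - 1/2 * (phi A (i - 2) - phi B (i - 2))"
proof (intro allI impI)
  fix i :: int assume i: "i \<ge> 1"
  define i' where "i' = nat i"
  have i': "i = int i'" "i' \<ge> 1" using i by (simp_all add: i'_def)
  define N where "N = Nc + i'"
  have N2: "N \<ge> 2" using Nc by (simp add: N_def)
  define F where "F = (\<lambda>t. Phi A t - Phi B t)"
  define G where "G = (\<lambda>t. Phi C0 t - Phi D0 t)"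
  have sF: "smooth F" unfolding F_def by (intro smooth_diff smooth_Phi)
  have sG: "smooth G" unfolding G_def by (intro smooth_diff smooth_Phi)
  have rel': "\<forall>t>0. (t\<^sup>2 + t) * F t = (t - 1) * G t" using rel by (simp add: F_def G_def)
  have dr: "2 * (deriv ^^ N) F 1 + 3 * real N * (deriv ^^ (N-1)) F 1 + real N * (real N - 1) * (deriv ^^ (N-2)) F 1
     = real N * (deriv ^^ (N-1)) G 1" by (rule deriv_rel[OF sF sG rel' N2])
  have dF: "(deriv ^^ j) F 1 = Phi_d A j - Phi_d B j" for j
    unfolding F_def Phi_d_def using hd_diff[where f="Phi A" and g="Phi B" and n=j, OF smooth_Phi smooth_Phi] by simp
  have dG: "(deriv ^^ j) G 1 = Phi_d C0 j - Phi_d D0 j" for j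
    unfolding G_def Phi_d_def using hd_diff[where f="Phi C0" and g="Phi D0" and n=j, OF smooth_Phi smooth_Phi] by simp
  have n0: "nat (int Nc + i) = N" and n1: "nat (int Nc + (i - 1)) = N - 1" and n2: "nat (int Nc + (i - 2)) = N - 2"
    and n3: "nat (int (Nc - 1) + i) = N - 1"
    using i' Nc by (simp_all add: N_def)
  have P: "((-2::real) ^ (Nc - 1)) = (-2) ^ Nc / -2"
    using Nc by (cases Nc) auto
  show "phi A i - phi B i = - (phi C0 i - phi D0 i) - 3/2 * (phi A (i - 1) - phi B (i - 1)) - 1/2 * (phi A (i - 2) - phi B (i - 2))"
    unfolding phi_def nA nB nC nD n0 n1 n2 n3 P
    using final_arith[OF N2 dr[unfolded dF dG], of "(-2)^Nc"]
    by (simp add: algebra_simps diff_divide_distrib)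
qed


lemma finite_comps: "wf_diagram D \<Longrightarrow> finite (comps D)"
  by (simp add: comps_def quotient_def wf_diagram_def arcs_def)

lemma comp_nonempty: "K \<in> comps D \<Longrightarrow> \<exists>x. x \<in> K"
  unfolding comps_def by (drule quot_mem) (auto simp del: Image_singleton_iff)

lemma not_in_Union:
  assumes K1: "K1 \<in> comps D" and C: "C \<subseteq> comps D" and n: "K1 \<notin> C" and x: "x \<in> K1"
  shows "x \<notin> \<Union>C"
proof
  assume "x \<in> \<Union>C"
  then obtain K' where K': "K' \<in> C" "x \<in> K'" by blast
  then have "K' \<in> comps D" using C by blast
  then have "K' = K1" using quot_disj[of K' "arcs D" "strand_rel D" K1 x] K1 K'(2) x unfolding comps_def by blast
  then show False using K'(1) n by simp
qed

lemma cross_info: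
  assumes wf: "wf_diagram D" and k: "k < length (sites D)" and ck: "snd (sites D ! k) \<noteq> Zero"
    and K1: "K1 \<in> comps D" and K2: "K2 \<in> comps D" and ne: "K1 \<noteq> K2"
    and cr: "crossing_between D k K1 K2"
  shows "comps (set_type D k Zero) = insert (K1 \<union> K2) (comps D - {K1, K2})"
    and "lb D k 0 \<in> K1 \<union> K2" "lb D k 1 \<in> K1 \<union> K2" "lb D k 2 \<in> K1 \<union> K2" "lb D k 3 \<in> K1 \<union> K2"
    and "(lb D k 0 \<in> K1 \<and> lb D k 3 \<in> K2) \<or> (lb D k 0 \<in> K2 \<and> lb D k 3 \<in> K1)"
proof -
  show or: "(lb D k 0 \<in> K1 \<and> lb D k 3 \<in> K2) \<or> (lb D k 0 \<in> K2 \<and> lb D k 3 \<in> K1)"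
    using cr unfolding crossing_between_def Let_def .
  have "comps (set_type D k Zero) = insert (K1 \<union> K2) (comps D - {K1, K2}) \<and>
     lb D k 0 \<in> K1 \<union> K2 \<and> lb D k 1 \<in> K1 \<union> K2 \<and> lb D k 2 \<in> K1 \<union> K2 \<and> lb D k 3 \<in> K1 \<union> K2"
    using or
  proof
    assume a: "lb D k 0 \<in> K1 \<and> lb D k 3 \<in> K2"
    note cs = comps_smooth[OF wf k ck K1 K2 ne conjunct1[OF a] conjunct2[OF a]]
    then show ?thesis using a by auto
  next
    assume a: "lb D k 0 \<in> K2 \<and> lb D k 3 \<in> K1"
    note cs = comps_smooth[OF wf k ck K2 K1 ne[symmetric] conjunct1[OF a] conjunct2[OF a]]
    have "insert (K2 \<union> K1) (comps D - {K2, K1}) = insert (K1 \<union> K2) (comps D - {K1, K2})"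
      by (simp add: Un_commute insert_commute)
    then show ?thesis using a cs by auto
  qed
  then show "comps (set_type D k Zero) = insert (K1 \<union> K2) (comps D - {K1, K2})"
    "lb D k 0 \<in> K1 \<union> K2" "lb D k 1 \<in> K1 \<union> K2" "lb D k 2 \<in> K1 \<union> K2" "lb D k 3 \<in> K1 \<union> K2"
    by auto
qed

lemma se_nz: "c \<noteq> Zero \<Longrightarrow> c' \<noteq> Zero \<Longrightarrow> \<not> (site_lab x 0 \<in> K \<and> site_lab x 3 \<in> K) \<Longrightarrow>
  site_edges K a x c = site_edges K a x c'"
  by (simp add: site_edges_def Let_def)

lemma se_out: "site_lab x 0 \<notin> K \<Longrightarrow> site_lab x 1 \<notin> K \<Longrightarrow> site_lab x 2 \<notin> K \<Longrightarrow> site_lab x 3 \<notin> K \<Longrightarrow>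
  site_edges K a x c = {}"
  by (auto simp: site_edges_def Let_def)

lemma not_full: "\<not> (lb D j 0 \<in> K \<and> lb D j 3 \<in> K) \<Longrightarrow> j \<notin> full_sites D K"
  by (simp add: full_sites_def)

theorem lemma4p1:
  fixes L :: diagram and i1 i2 :: nat and K1 K2 :: "nat set"
  assumes "link_diagram L"
    and "i1 < length (sites L)" and "i2 < length (sites L)" and "i1 \<noteq> i2"
    and "snd (sites L ! i1) = Pos" and "snd (sites L ! i2) = Neg"
    and "K1 \<in> comps L" and "K2 \<in> comps L" and "K1 \<noteq> K2"
    and "crossing_between L i1 K1 K2" and "crossing_between L i2 K1 K2"
  shows "(\<forall>t>0. (t\<^sup>2 + t) * (Phi L t - Phi (set_type (set_type L i1 Neg) i2 Pos) t)
                = (t - 1) * (Phi (set_type L i1 Zero) t - Phi (set_type (set_type L i1 Neg) i2 Zero) t))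
       \<and> (\<forall>i::int. i \<ge> 1 \<longrightarrow>
            phi L i - phi (set_type (set_type L i1 Neg) i2 Pos) i
          = - (phi (set_type L i1 Zero) i - phi (set_type (set_type L i1 Neg) i2 Zero) i)
            - 3/2 * (phi L (i - 1) - phi (set_type (set_type L i1 Neg) i2 Pos) (i - 1))
            - 1/2 * (phi L (i - 2) - phi (set_type (set_type L i1 Neg) i2 Pos) (i - 2)))"
proof -
  note ld = assms(1) and i1 = assms(2) and i2 = assms(3) and i12 = assms(4) and c1 = assms(5) and c2 = assms(6)
    and K1 = assms(7) and K2 = assms(8) and ne = assms(9) and cr1 = assms(10) and cr2 = assms(11)
  define M where "M = set_type L i1 Neg"
  define Lmp where "Lmp = set_type M i2 Pos"
  define L0m where "L0m = set_type L i1 Zero"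
  define Lm0 where "Lm0 = set_type M i2 Zero"
  have wfL: "wf_diagram L" using ld by (simp add: link_diagram_def)
  have nzL: "\<And>j. j < length (sites L) \<Longrightarrow> snd (sites L ! j) \<noteq> Zero" using ld by (simp add: link_diagram_def)
  have lenM: "length (sites M) = length (sites L)" by (simp add: M_def)
  have i1M: "i1 < length (sites M)" and i2M: "i2 < length (sites M)" using i1 i2 lenM by auto
  have lens: "length (sites Lmp) = length (sites L)" "length (sites L0m) = length (sites L)" "length (sites Lm0) = length (sites L)"
    by (simp_all add: Lmp_def L0m_def Lm0_def M_def)
  have fstM: "\<And>j. fst (sites M ! j) = fst (sites L ! j)" using i1 by (simp add: M_def)
  have fsts: "\<And>j. fst (sites Lmp ! j) = fst (sites L ! j)" "\<And>j. fst (sites L0m ! j) = fst (sites L ! j)"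
    "\<And>j. fst (sites Lm0 ! j) = fst (sites L ! j)"
    using i1 i2M fstM by (simp_all add: Lmp_def L0m_def Lm0_def)
  have sndM: "\<And>j. snd (sites M ! j) = (if j = i1 then Neg else snd (sites L ! j))"
    using i1 by (simp add: M_def set_type_snd)
  have sndLmp: "\<And>j. snd (sites Lmp ! j) = (if j = i2 then Pos else if j = i1 then Neg else snd (sites L ! j))"
    using i2M sndM by (simp add: Lmp_def set_type_snd)
  have sndL0m: "\<And>j. snd (sites L0m ! j) = (if j = i1 then Zero else snd (sites L ! j))"
    using i1 by (simp add: L0m_def set_type_snd)
  have sndLm0: "\<And>j. snd (sites Lm0 ! j) = (if j = i2 then Zero else if j = i1 then Neg else snd (sites L ! j))"
    using i2M sndM by (simp add: Lm0_def set_type_snd)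
  have wfM: "wf_diagram M" using wfL i1 by (simp add: M_def wf_set_type)
  have cM: "comps M = comps L" unfolding M_def by (rule comps_set_type_nz[OF i1]) (use c1 in auto)
  have M2: "snd (sites M ! i2) = Neg" using sndM i12 c2 by simp
  have cLmp: "comps Lmp = comps L" unfolding Lmp_def cM[symmetric] by (rule comps_set_type_nz[OF i2M]) (use M2 in auto)
  define CC where "CC = comps L"
  define K12 where "K12 = K1 \<union> K2"
  define CC' where "CC' = insert K12 (CC - {K1, K2})"
  note ci1 = cross_info[OF wfL i1 nzL[OF i1] K1 K2 ne cr1]
  have crM: "crossing_between M i2 K1 K2" using cr2 by (simp add: crossing_between_def fstM)
  note ci2 = cross_info[OF wfM i2M, unfolded M2, OF _ K1[folded cM] K2[folded cM] ne crM, simplified]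
  have cL0m: "comps L0m = CC'" using ci1(1) by (simp add: L0m_def CC'_def CC_def K12_def)
  have cLm0: "comps Lm0 = CC'" using ci2(1) by (simp add: Lm0_def CC'_def CC_def K12_def cM)
  have lab1: "\<And>j. j \<in> {0,1,2,3} \<Longrightarrow> lb L i1 j \<in> K12" using ci1(2-5) by (auto simp: K12_def)
  have lab2: "\<And>j. j \<in> {0,1,2,3} \<Longrightarrow> lb L i2 j \<in> K12" using ci2(2-5) fstM by (auto simp: K12_def)
  have or1: "(lb L i1 0 \<in> K1 \<and> lb L i1 3 \<in> K2) \<or> (lb L i1 0 \<in> K2 \<and> lb L i1 3 \<in> K1)" using ci1(6) .
  have or2: "(lb L i2 0 \<in> K1 \<and> lb L i2 3 \<in> K2) \<or> (lb L i2 0 \<in> K2 \<and> lb L i2 3 \<in> K1)" using ci2(6) fstM by simp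
  have finCC: "finite CC" using finite_comps[OF wfL] by (simp add: CC_def)
  have K12n: "K12 \<notin> CC"
  proof
    assume a: "K12 \<in> CC"
    obtain x1 where x1: "x1 \<in> K1" using comp_nonempty[OF K1] by blast
    obtain x2 where x2: "x2 \<in> K2" using comp_nonempty[OF K2] by blast
    have "K12 = K1" using quot_disj[of K12 "arcs L" "strand_rel L" K1 x1] a K1 x1
      unfolding CC_def comps_def K12_def by blast
    moreover have "K12 = K2" using quot_disj[of K12 "arcs L" "strand_rel L" K2 x2] a K2 x2
      unfolding CC_def comps_def K12_def by blast
    ultimately show False using ne by simp
  qed
  define N where "N = card CC"
  have N2: "N \<ge> 2"
  proof -
    have "{K1, K2} \<subseteq> CC" using K1 K2 by (simp add: CC_def)
    then have "card {K1, K2} \<le> N" unfolding N_def by (rule card_mono[OF finCC])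
    then show ?thesis using ne by simp
  qed
  have cardCC': "card CC' = N - 1"
  proof -
    have "card (CC - {K1, K2}) = N - 2" using K1 K2 ne finCC by (simp add: N_def CC_def card_Diff_subset)
    then show ?thesis unfolding CC'_def using K12n finCC N2 by simp
  qed
  have nL: "ncomp L = N" and nLmp: "ncomp Lmp = N" and nL0m: "ncomp L0m = N - 1" and nLm0: "ncomp Lm0 = N - 1"
    by (simp_all add: ncomp_def N_def CC_def cLmp cL0m cLm0 cardCC')
  have part1: "\<forall>t>0. (t\<^sup>2 + t) * (Phi L t - Phi Lmp t) = (t - 1) * (Phi L0m t - Phi Lm0 t)"
  proof (intro allI impI)
    fix t :: real assume t: "t > 0"
    define P12 where "P12 = {C \<in> Pow CC. K1 \<in> C \<and> K2 \<in> C}"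
    define Q12 where "Q12 = {C \<in> Pow CC'. K12 \<in> C}"
    define h where "h C = insert K12 (C - {K1, K2})" for C
    define f1 where "f1 C = (-1::real) ^ (N - card C) * (Xinv L C t - Xinv Lmp C t)" for C
    define f2 where "f2 C = (-1::real) ^ (N - 1 - card C) * (Xinv L0m C t - Xinv Lm0 C t)" for C
    have finCC': "finite CC'" using finCC by (simp add: CC'_def)
    have A: "Phi L t - Phi Lmp t = (\<Sum>C\<in>P12. f1 C)"
    proof -
      have p1: "Phi L t = (\<Sum>C\<in>Pow CC. (-1) ^ (N - card C) * Xinv L C t)"
        unfolding Phi_def nL CC_def using N2 by simp
      have p2: "Phi Lmp t = (\<Sum>C\<in>Pow CC. (-1) ^ (N - card C) * Xinv Lmp C t)"
        unfolding Phi_def nLmp cLmp CC_def using N2 by simp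
      have "Phi L t - Phi Lmp t = (\<Sum>C\<in>Pow CC. f1 C)"
        unfolding p1 p2 sum_subtractf[symmetric] f1_def right_diff_distrib ..
      also have "\<dots> = (\<Sum>C\<in>P12. f1 C)"
      proof (rule sum.mono_neutral_right)
        show "finite (Pow CC)" using finCC by simp
        show "P12 \<subseteq> Pow CC" by (auto simp: P12_def)
        show "\<forall>C\<in>Pow CC - P12. f1 C = 0"
        proof
          fix C assume C: "C \<in> Pow CC - P12"
          then have Csub: "C \<subseteq> comps L" and nb: "\<not> (K1 \<in> C \<and> K2 \<in> C)" by (auto simp: P12_def CC_def)
          have nb': "\<not> (lb L j 0 \<in> \<Union>C \<and> lb L j 3 \<in> \<Union>C)"
            if "(lb L j 0 \<in> K1 \<and> lb L j 3 \<in> K2) \<or> (lb L j 0 \<in> K2 \<and> lb L j 3 \<in> K1)" for j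
            using that nb not_in_Union[OF K1 Csub] not_in_Union[OF K2 Csub] by blast
          have "jonesV Lmp (\<Union>C) (card C) t = jonesV L (\<Union>C) (card C) t"
          proof (rule jonesV_indep)
            show "length (sites Lmp) = length (sites L)" by (rule lens(1))
            show "\<forall>j<length (sites L). fst (sites Lmp ! j) = fst (sites L ! j)" using fsts by simp
            show "\<forall>j<length (sites L). snd (sites Lmp ! j) = snd (sites L ! j) \<or>
               (j \<notin> full_sites L (\<Union>C) \<and> j \<notin> full_sites Lmp (\<Union>C) \<and>
                (\<forall>a. site_edges (\<Union>C) a (fst (sites L ! j)) (snd (sites L ! j)) = site_edges (\<Union>C) a (fst (sites L ! j)) (snd (sites Lmp ! j))))"
            proof (intro allI impI)
              fix j assume j: "j < length (sites L)"
              show "snd (sites Lmp ! j) = snd (sites L ! j) \<or>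
               (j \<notin> full_sites L (\<Union>C) \<and> j \<notin> full_sites Lmp (\<Union>C) \<and>
                (\<forall>a. site_edges (\<Union>C) a (fst (sites L ! j)) (snd (sites L ! j)) = site_edges (\<Union>C) a (fst (sites L ! j)) (snd (sites Lmp ! j))))"
              proof (cases "j = i1 \<or> j = i2")
                case False then show ?thesis using sndLmp by simp
              next
                case True
                then have nbj: "\<not> (lb L j 0 \<in> \<Union>C \<and> lb L j 3 \<in> \<Union>C)" using nb' or1 or2 by blast
                have nbj': "\<not> (lb Lmp j 0 \<in> \<Union>C \<and> lb Lmp j 3 \<in> \<Union>C)" using nbj fsts by simp
                have z1: "snd (sites Lmp ! j) \<noteq> Zero" using sndLmp True by auto
                have z2: "snd (sites L ! j) \<noteq> Zero" using nzL j by simp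
                show ?thesis using not_full[OF nbj] not_full[OF nbj'] se_nz[OF z2 z1 nbj] by blast
              qed
            qed
          qed
          then show "f1 C = 0" by (simp add: f1_def Xinv_def)
        qed
      qed
      finally show ?thesis .
    qed
    have B: "Phi L0m t - Phi Lm0 t = (\<Sum>C\<in>Q12. f2 C)"
    proof -
      have p1: "Phi L0m t = (\<Sum>C\<in>Pow CC'. (-1) ^ (N - 1 - card C) * Xinv L0m C t)"
        unfolding Phi_def nL0m cL0m using N2 by simp
      have p2: "Phi Lm0 t = (\<Sum>C\<in>Pow CC'. (-1) ^ (N - 1 - card C) * Xinv Lm0 C t)"
        unfolding Phi_def nLm0 cLm0 using N2 by simp
      have "Phi L0m t - Phi Lm0 t = (\<Sum>C\<in>Pow CC'. f2 C)"
        unfolding p1 p2 sum_subtractf[symmetric] f2_def right_diff_distrib ..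
      also have "\<dots> = (\<Sum>C\<in>Q12. f2 C)"
      proof (rule sum.mono_neutral_right)
        show "finite (Pow CC')" using finCC' by simp
        show "Q12 \<subseteq> Pow CC'" by (auto simp: Q12_def)
        show "\<forall>C\<in>Pow CC' - Q12. f2 C = 0"
        proof
          fix C assume C: "C \<in> Pow CC' - Q12"
          then have Csub: "C \<subseteq> comps L" and nK1: "K1 \<notin> C" and nK2: "K2 \<notin> C"
            using K12n by (auto simp: Q12_def CC'_def CC_def)
          have out: "x \<notin> \<Union>C" if x: "x \<in> K12" for x
          proof (cases "x \<in> K1")
            case True then show ?thesis by (rule not_in_Union[OF K1 Csub nK1])
          next
            case False then have "x \<in> K2" using x by (simp add: K12_def)
            then show ?thesis by (rule not_in_Union[OF K2 Csub nK2])
          qed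
          have "jonesV Lm0 (\<Union>C) (card C) t = jonesV L0m (\<Union>C) (card C) t"
          proof (rule jonesV_indep)
            show "length (sites Lm0) = length (sites L0m)" using lens by simp
            show "\<forall>j<length (sites L0m). fst (sites Lm0 ! j) = fst (sites L0m ! j)" using fsts by simp
            show "\<forall>j<length (sites L0m). snd (sites Lm0 ! j) = snd (sites L0m ! j) \<or>
               (j \<notin> full_sites L0m (\<Union>C) \<and> j \<notin> full_sites Lm0 (\<Union>C) \<and>
                (\<forall>a. site_edges (\<Union>C) a (fst (sites L0m ! j)) (snd (sites L0m ! j)) = site_edges (\<Union>C) a (fst (sites L0m ! j)) (snd (sites Lm0 ! j))))"
            proof (intro allI impI)
              fix j assume j: "j < length (sites L0m)"
              show "snd (sites Lm0 ! j) = snd (sites L0m ! j) \<or>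
               (j \<notin> full_sites L0m (\<Union>C) \<and> j \<notin> full_sites Lm0 (\<Union>C) \<and>
                (\<forall>a. site_edges (\<Union>C) a (fst (sites L0m ! j)) (snd (sites L0m ! j)) = site_edges (\<Union>C) a (fst (sites L0m ! j)) (snd (sites Lm0 ! j))))"
              proof (cases "j = i1 \<or> j = i2")
                case False then show ?thesis using sndLm0 sndL0m by simp
              next
                case True
                have lo: "lb L j i \<notin> \<Union>C" if i: "i \<in> {0,1,2,3}" for i
                proof -
                  have "lb L j i \<in> K12" using True
                  proof
                    assume "j = i1" then show ?thesis using lab1[OF i] by simp
                  next
                    assume "j = i2" then show ?thesis using lab2[OF i] by simp
                  qed
                  then show ?thesis by (rule out)
                qed
                have l0: "lb L0m j 0 \<notin> \<Union>C" "lb Lm0 j 0 \<notin> \<Union>C" using lo[of 0] fsts by simp_all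
                have "site_edges (\<Union>C) a (fst (sites L0m ! j)) c = {}" for a c
                  using lo[of 0] lo[of 1] lo[of 2] lo[of 3] fsts by (intro se_out) simp_all
                then show ?thesis using not_full[of L0m j "\<Union>C"] not_full[of Lm0 j "\<Union>C"] l0 by simp
              qed
            qed
          qed
          then show "f2 C = 0" by (simp add: f2_def Xinv_def)
        qed
      qed
      finally show ?thesis .
    qed
    have hP: "h C - {K12} = C - {K1, K2}" if "C \<in> P12" for C
      using that K12n by (auto simp: h_def P12_def)
    have inj: "inj_on h P12"
    proof (rule inj_onI)
      fix C D assume C: "C \<in> P12" and D: "D \<in> P12" and hh: "h C = h D"
      have "C - {K1, K2} = D - {K1, K2}" using hP[OF C] hP[OF D] hh by simp
      moreover have "K1 \<in> C" "K2 \<in> C" "K1 \<in> D" "K2 \<in> D" using C D by (auto simp: P12_def)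
      ultimately show "C = D" by blast
    qed
    have img: "h ` P12 = Q12"
    proof
      show "h ` P12 \<subseteq> Q12" by (auto simp: h_def P12_def Q12_def CC'_def)
      show "Q12 \<subseteq> h ` P12"
      proof
        fix C' assume C': "C' \<in> Q12"
        define C where "C = insert K1 (insert K2 (C' - {K12}))"
        have sub: "C' - {K12} \<subseteq> CC - {K1, K2}" using C' by (auto simp: Q12_def CC'_def)
        have "C \<in> P12" using sub K1 K2 by (auto simp: C_def P12_def CC_def)
        moreover have "h C = C'" using sub C' by (auto simp: h_def C_def Q12_def)
        ultimately show "C' \<in> h ` P12" by blast
      qed
    qed
    have Csum: "(\<Sum>C\<in>Q12. f2 C) = (\<Sum>C\<in>P12. f2 (h C))"
      unfolding img[symmetric] by (rule sum.reindex[OF inj, unfolded comp_def])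
    have D: "t * f1 C = (t - 1) / (t + 1) * f2 (h C)" if C: "C \<in> P12" for C
    proof -
      have Csub: "C \<subseteq> CC" and k1: "K1 \<in> C" and k2: "K2 \<in> C" using C by (auto simp: P12_def)
      have finC: "finite C" using Csub finCC finite_subset by blast
      have c2: "card C \<ge> 2"
      proof -
        have "card {K1, K2} \<le> card C" using k1 k2 by (intro card_mono[OF finC]) auto
        then show ?thesis using ne by simp
      qed
      have cN: "card C \<le> N" unfolding N_def using card_mono[OF finCC Csub] .
      have hc: "card (h C) = card C - 1"
      proof -
        have "card (C - {K1, K2}) = card C - 2" using k1 k2 ne finC by (simp add: card_Diff_subset)
        moreover have "K12 \<notin> C - {K1, K2}" using K12n Csub by auto
        ultimately show ?thesis using finC c2 by (simp add: h_def)
      qed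
      have hU: "\<Union>(h C) = \<Union>C" using k1 k2 by (auto simp: h_def K12_def)
      have KC: "K12 \<subseteq> \<Union>C" using k1 k2 by (auto simp: K12_def)
      have sk1: "t * Xinv L C t - inverse t * Xinv M C t = (t - 1) / (t + 1) * Xinv L0m (h C) t"
      proof -
        have "t * Xinv (set_type L i1 Pos) C t - inverse t * Xinv (set_type L i1 Neg) C t
           = (t - 1) / (t + 1) * Xinv (set_type L i1 Zero) (h C) t"
          by (rule X_skein[OF i1 _ _ _ _ c2 t hc hU]) (use lab1 KC in auto)
        then show ?thesis using set_type_same[OF i1 c1] by (simp add: M_def L0m_def)
      qed
      have sk2: "t * Xinv Lmp C t - inverse t * Xinv M C t = (t - 1) / (t + 1) * Xinv Lm0 (h C) t"
      proof -
        have "t * Xinv (set_type M i2 Pos) C t - inverse t * Xinv (set_type M i2 Neg) C t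
           = (t - 1) / (t + 1) * Xinv (set_type M i2 Zero) (h C) t"
          by (rule X_skein[OF i2M _ _ _ _ c2 t hc hU]) (use lab2[of 0] lab2[of 1] lab2[of 2] lab2[of 3] KC in \<open>auto simp: fstM\<close>)
        then show ?thesis using set_type_same[OF i2M M2] by (simp add: Lmp_def Lm0_def)
      qed
      have sg: "N - 1 - card (h C) = N - card C" using hc c2 by simp
      have eq: "t * (Xinv L C t - Xinv Lmp C t) = (t - 1) / (t + 1) * (Xinv L0m (h C) t - Xinv Lm0 (h C) t)"
        using sk1 sk2 by (simp add: algebra_simps)
      have "t * f1 C = (-1) ^ (N - card C) * (t * (Xinv L C t - Xinv Lmp C t))"
        unfolding f1_def by (rule mult.left_commute)
      also have "\<dots> = (t - 1) / (t + 1) * ((-1) ^ (N - card C) * (Xinv L0m (h C) t - Xinv Lm0 (h C) t))"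
        unfolding eq by (rule mult.left_commute)
      also have "\<dots> = (t - 1) / (t + 1) * f2 (h C)" unfolding f2_def sg ..
      finally show ?thesis .
    qed
    have "t * (Phi L t - Phi Lmp t) = (\<Sum>C\<in>P12. t * f1 C)" unfolding A by (rule sum_distrib_left)
    also have "\<dots> = (\<Sum>C\<in>P12. (t - 1) / (t + 1) * f2 (h C))" by (rule sum.cong[OF refl]) (rule D)
    also have "\<dots> = (t - 1) / (t + 1) * (Phi L0m t - Phi Lm0 t)" unfolding B Csum by (rule sum_distrib_left[symmetric])
    finally have tt: "t * (Phi L t - Phi Lmp t) = (t - 1) / (t + 1) * (Phi L0m t - Phi Lm0 t)" .
    have t1: "t + 1 \<noteq> 0" using t by simp
    have "(t\<^sup>2 + t) * (Phi L t - Phi Lmp t) = (t + 1) * (t * (Phi L t - Phi Lmp t))"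
      by (simp add: algebra_simps power2_eq_square)
    also have "\<dots> = (t - 1) * (Phi L0m t - Phi Lm0 t)" unfolding tt using t1 by simp
    finally show "(t\<^sup>2 + t) * (Phi L t - Phi Lmp t) = (t - 1) * (Phi L0m t - Phi Lm0 t)" .
  qed
  have part2': "\<forall>i::int. i \<ge> 1 \<longrightarrow>
            phi L i - phi Lmp i
          = - (phi L0m i - phi Lm0 i)
            - 3/2 * (phi L (i - 1) - phi Lmp (i - 1))
            - 1/2 * (phi L (i - 2) - phi Lmp (i - 2))"
    by (rule part2[OF part1 nL nLmp nL0m nLm0 N2])
  show ?thesis using part1 part2' unfolding Lmp_def Lm0_def L0m_def M_def by blast
qed

end
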